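(* Let $\bar f(x,w):[-1,1]^n\times[-1,1]^m\to\mathbb{R}$, $n,m\ge 1$, be a smooth function of $[x,w]\in[-1,1]^{n+m}$ which is analytic (i.e. extends analytically) on the set of all $[x,w]\in\mathbb{C}^{n+m}$ with $\Re(x_1^2+\cdots+x_n^2+w_1^2+\cdots+w_m^2)\ge -t^2$, for some $t>0$. Then for any $\varepsilon>0$ there exist $h\in\mathbb{Z}^+$ and two Chebyshev polynomials $\bar\phi(x):[-1,1]^n\to\mathbb{R}^{1\times h}$ and $\bar a(w):[-1,1]^m\to\mathbb{R}^{h\times 1}$ such that $$\sup_{[x,w]\in[-1,1]^{n+m}}\|\bar f(x,w) - \bar\phi(x)\bar a(w)\| \le \varepsilon$$ and $h = O\big((\log(1/\varepsilon))^m\big)$.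
   Context: $\Re(\cdot)$ denotes the real part of a complex number. A Chebyshev polynomial here means a (vector of) polynomial(s) expressed as finite sums of products of Chebyshev polynomials $T_k$ in the coordinates. *)

theory Defs
  imports "HOL-Analysis.Analysis"
begin

fun cheb :: "nat \<Rightarrow> real \<Rightarrow> real" where
  "cheb 0 x = 1"
| "cheb (Suc 0) x = x"
| "cheb (Suc (Suc k)) x = 2 * x * cheb (Suc k) x - cheb k x"

definition cube :: "(real^'k) set" where
  "cube = {x. \<forall>i. \<bar>x $ i\<bar> \<le> 1}"

definition cheb_poly :: "(real^'k \<Rightarrow> real) \<Rightarrow> bool" where
  "cheb_poly p \<longleftrightarrow> (\<exists>K c. finite K \<and>
     (\<forall>x\<in>cube. p x = (\<Sum>\<kappa>\<in>K. c \<kappa> * (\<Prod>i\<in>UNIV. cheb (\<kappa> i) (x $ i)))))"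

definition cmul :: "complex \<Rightarrow> (complex^'n) \<times> (complex^'m) \<Rightarrow> (complex^'n) \<times> (complex^'m)" where
  "cmul c p = ((\<chi> i. c * fst p $ i), (\<chi> j. c * snd p $ j))"

text \<open>Holomorphy in several complex variables on a set U (used with U open):
  Frechet differentiable at each point with complex-linear derivative.\<close>
definition cholomorphic_on ::
  "((complex^'n) \<times> (complex^'m) \<Rightarrow> complex) \<Rightarrow> ((complex^'n) \<times> (complex^'m)) set \<Rightarrow> bool" where
  "cholomorphic_on F U \<longleftrightarrow>
     (\<forall>p\<in>U. \<exists>D. (F has_derivative D) (at p) \<and> (\<forall>v. D (cmul \<i> v) = \<i> * D v))"

definition region :: "real \<Rightarrow> ((complex^'n) \<times> (complex^'m)) set" where
  "region t = {(z, u). Re ((\<Sum>i\<in>UNIV. (z $ i)^2) + (\<Sum>j\<in>UNIV. (u $ j)^2)) \<ge> - (t^2)}"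

definition cemb :: "real^'k \<Rightarrow> complex^'k" where
  "cemb x = (\<chi> i. complex_of_real (x $ i))"

definition analytic_ext :: "real \<Rightarrow> (real^'n \<Rightarrow> real^'m \<Rightarrow> real) \<Rightarrow> bool" where
  "analytic_ext t f \<longleftrightarrow> (\<exists>F U. open U \<and> region t \<subseteq> U \<and> cholomorphic_on F U \<and>
     (\<forall>x\<in>cube. \<forall>w\<in>cube. F (cemb x, cemb w) = complex_of_real (f x w)))"

text \<open>Separable Chebyshev approximation of rank h within eps:
  phi(x) in R^{1 x h}, a(w) in R^{h x 1}, product = sum_j phi_j(x) a_j(w).\<close>
definition cheb_sep_approx :: "(real^'n \<Rightarrow> real^'m \<Rightarrow> real) \<Rightarrow> real \<Rightarrow> nat \<Rightarrow> bool" where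
  "cheb_sep_approx f eps h \<longleftrightarrow> h \<ge> 1 \<and>
     (\<exists>(\<phi> :: nat \<Rightarrow> real^'n \<Rightarrow> real) (a :: nat \<Rightarrow> real^'m \<Rightarrow> real).
        (\<forall>j<h. cheb_poly (\<phi> j)) \<and> (\<forall>j<h. cheb_poly (a j)) \<and>
        (\<forall>x\<in>cube. \<forall>w\<in>cube. \<bar>f x w - (\<Sum>j<h. \<phi> j x * a j w)\<bar> \<le> eps))"

end

theory Submission
  imports Defs "HOL-Complex_Analysis.Complex_Analysis"
begin


definition cmono :: "('k \<Rightarrow> nat) \<Rightarrow> real^'k \<Rightarrow> real" where
  "cmono \<kappa> x = (\<Prod>i\<in>UNIV. cheb (\<kappa> i) (x $ i))"

lemma cheb_poly_zero: "cheb_poly (\<lambda>x. 0)"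
  unfolding cheb_poly_def by (rule exI[of _ "{}"]) auto

lemma cheb_poly_cmono: "cheb_poly (cmono \<kappa>)"
  unfolding cheb_poly_def cmono_def
  by (rule exI[of _ "{\<kappa>}"], rule exI[of _ "\<lambda>_. 1"]) auto

lemma cheb_poly_scale: "cheb_poly p \<Longrightarrow> cheb_poly (\<lambda>x. c * p x)"
  unfolding cheb_poly_def
  apply (elim exE conjE)
  subgoal for K d
    by (rule exI[of _ K], rule exI[of _ "\<lambda>k. c * d k"]) (auto simp: sum_distrib_left mult.assoc)
  done

lemma cheb_poly_add:
  assumes "cheb_poly p" "cheb_poly q" shows "cheb_poly (\<lambda>x. p x + q x)"
proof -
  obtain K1 c1 where K1: "finite K1" "\<forall>x\<in>cube. p x = (\<Sum>\<kappa>\<in>K1. c1 \<kappa> * (\<Prod>i\<in>UNIV. cheb (\<kappa> i) (x $ i)))"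
    using assms(1) unfolding cheb_poly_def by blast
  obtain K2 c2 where K2: "finite K2" "\<forall>x\<in>cube. q x = (\<Sum>\<kappa>\<in>K2. c2 \<kappa> * (\<Prod>i\<in>UNIV. cheb (\<kappa> i) (x $ i)))"
    using assms(2) unfolding cheb_poly_def by blast
  define c where "c \<kappa> = (if \<kappa> \<in> K1 then c1 \<kappa> else 0) + (if \<kappa> \<in> K2 then c2 \<kappa> else 0)" for \<kappa>
  show ?thesis unfolding cheb_poly_def
  proof (intro exI conjI ballI)
    show "finite (K1 \<union> K2)" using K1 K2 by auto
    fix x :: "real^'a" assume x: "x \<in> cube"
    let ?m = "\<lambda>\<kappa>. (\<Prod>i\<in>UNIV. cheb (\<kappa> i) (x $ i))"
    have e1: "(\<Sum>\<kappa>\<in>K1 \<union> K2. (if \<kappa> \<in> K1 then c1 \<kappa> else 0) * ?m \<kappa>) = (\<Sum>\<kappa>\<in>K1. c1 \<kappa> * ?m \<kappa>)"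
      by (rule sum.mono_neutral_cong_right) (use K1 K2 in auto)
    have e2: "(\<Sum>\<kappa>\<in>K1 \<union> K2. (if \<kappa> \<in> K2 then c2 \<kappa> else 0) * ?m \<kappa>) = (\<Sum>\<kappa>\<in>K2. c2 \<kappa> * ?m \<kappa>)"
      by (rule sum.mono_neutral_cong_right) (use K1 K2 in auto)
    show "p x + q x = (\<Sum>\<kappa>\<in>K1 \<union> K2. c \<kappa> * ?m \<kappa>)"
      using K1(2) K2(2) x e1 e2 by (simp add: c_def distrib_right sum.distrib)
  qed
qed

lemma cheb_poly_sum: "finite A \<Longrightarrow> (\<And>a. a \<in> A \<Longrightarrow> cheb_poly (p a)) \<Longrightarrow> cheb_poly (\<lambda>x. \<Sum>a\<in>A. p a x)"
  by (induction A rule: finite_induct) (auto intro: cheb_poly_add cheb_poly_zero)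

lemma cheb_poly_cong: "cheb_poly p \<Longrightarrow> (\<And>x. x \<in> cube \<Longrightarrow> p x = q x) \<Longrightarrow> cheb_poly q"
  unfolding cheb_poly_def by auto

lemma cmono_upd: "cmono (\<kappa>(a := k)) x = cheb k (x $ a) * (\<Prod>i\<in>UNIV - {a}. cheb (\<kappa> i) (x $ i))"
proof -
  have "cmono (\<kappa>(a := k)) x = cheb k (x $ a) * (\<Prod>i\<in>UNIV - {a}. cheb ((\<kappa>(a:=k)) i) (x $ i))"
    unfolding cmono_def by (subst prod.remove[of _ a]) auto
  also have "(\<Prod>i\<in>UNIV - {a}. cheb ((\<kappa>(a:=k)) i) (x $ i)) = (\<Prod>i\<in>UNIV - {a}. cheb (\<kappa> i) (x $ i))"
    by (rule prod.cong) auto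
  finally show ?thesis .
qed

lemma cheb_poly_coord_cmono: "cheb_poly (\<lambda>x. x $ a * cmono \<kappa> x)"
proof (cases "\<kappa> a")
  case 0
  have "x $ a * cmono \<kappa> x = cmono (\<kappa>(a := 1)) x" for x
  proof -
    have "cmono \<kappa> x = cmono (\<kappa>(a := 0)) x" using 0 by (metis fun_upd_triv)
    then show ?thesis by (simp add: cmono_upd)
  qed
  then show ?thesis using cheb_poly_cmono by simp
next
  case (Suc k)
  have "x $ a * cmono \<kappa> x = (1/2) * cmono (\<kappa>(a := Suc (Suc k))) x + (1/2) * cmono (\<kappa>(a := k)) x" for x
  proof -
    have "cmono \<kappa> x = cmono (\<kappa>(a := Suc k)) x" using Suc by (metis fun_upd_triv)
    then show ?thesis by (simp add: cmono_upd algebra_simps)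
  qed
  then show ?thesis
    by (intro cheb_poly_cong[OF cheb_poly_add[OF cheb_poly_scale[OF cheb_poly_cmono, of "1/2" "\<kappa>(a := Suc (Suc k))"] cheb_poly_scale[OF cheb_poly_cmono, of "1/2" "\<kappa>(a := k)"]]]) simp
qed

lemma cheb_poly_coord_mult:
  assumes "cheb_poly p" shows "cheb_poly (\<lambda>x. x $ a * p x)"
proof -
  obtain K c where K: "finite K" "\<forall>x\<in>cube. p x = (\<Sum>\<kappa>\<in>K. c \<kappa> * cmono \<kappa> x)"
    using assms unfolding cheb_poly_def cmono_def by blast
  have "cheb_poly (\<lambda>x. \<Sum>\<kappa>\<in>K. c \<kappa> * (x $ a * cmono \<kappa> x))"
    by (rule cheb_poly_sum[OF K(1)]) (intro cheb_poly_scale cheb_poly_coord_cmono)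
  then show ?thesis
    by (rule cheb_poly_cong) (simp add: K(2) sum_distrib_left algebra_simps)
qed

lemma cheb_poly_one: "cheb_poly (\<lambda>x. 1)"
  by (rule cheb_poly_cong[OF cheb_poly_cmono[of "\<lambda>_. 0"]]) (simp add: cmono_def)

lemma cheb_poly_coord_pow: "cheb_poly p \<Longrightarrow> cheb_poly (\<lambda>x. (x $ a) ^ k * p x)"
proof (induction k)
  case 0 then show ?case by simp
next
  case (Suc k)
  from cheb_poly_coord_mult[OF Suc.IH[OF Suc.prems], of a] show ?case by (simp add: mult.assoc)
qed

lemma cheb_poly_monomial_set: "finite A \<Longrightarrow> cheb_poly (\<lambda>x::real^'a. \<Prod>i\<in>A. (x $ i) ^ \<alpha> i)"
proof (induction A rule: finite_induct)
  case empty then show ?case using cheb_poly_one by simp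
next
  case (insert a A)
  then show ?case using cheb_poly_coord_pow[OF insert.IH, of a "\<alpha> a"] by simp
qed

lemma cheb_poly_monomial: "cheb_poly (\<lambda>x::real^'a. \<Prod>i\<in>UNIV. (x $ i) ^ \<alpha> i)"
  by (rule cheb_poly_monomial_set) simp



definition cA :: "real \<Rightarrow> nat \<Rightarrow> complex" where
  "cA \<eta> s = (if s = 0 then Complex (-(1+\<eta>)) (-\<eta>) else if s = 1 then Complex (1+\<eta>) (-\<eta>)
     else if s = 2 then Complex (1+\<eta>) \<eta> else Complex (-(1+\<eta>)) \<eta>)"
definition cB :: "real \<Rightarrow> nat \<Rightarrow> complex" where
  "cB \<eta> s = cA \<eta> (if s = 3 then 0 else Suc s)"
definition uu :: "nat \<Rightarrow> complex" where
  "uu s = (if s = 0 then \<i> else if s = 1 then 1 else if s = 2 then -\<i> else -1)"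
definition aa :: "real \<Rightarrow> nat \<Rightarrow> complex" where
  "aa \<eta> s = of_real (\<eta>/16) * uu s"
definition kerP :: "nat \<Rightarrow> real \<Rightarrow> nat \<Rightarrow> complex \<Rightarrow> complex \<Rightarrow> complex" where
  "kerP d \<eta> s z w = aa \<eta> s * (\<Sum>k<d. (1 - aa \<eta> s * (z - w))^k)"
definition ecoef :: "nat \<Rightarrow> real \<Rightarrow> nat \<Rightarrow> nat \<Rightarrow> complex \<Rightarrow> complex" where
  "ecoef d \<eta> s l z = (\<Sum>k\<in>{l..<d}. aa \<eta> s ^ (l+1) * of_nat (k choose l) * (1 - aa \<eta> s * z)^(k-l))"
definition Rect :: "real \<Rightarrow> complex set" where
  "Rect \<eta> = {z. \<bar>Re z\<bar> \<le> 1 + \<eta> \<and> \<bar>Im z\<bar> \<le> \<eta>}"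
definition SI :: "real \<Rightarrow> nat \<Rightarrow> (complex \<Rightarrow> complex) \<Rightarrow> complex" where
  "SI \<eta> s g = integral {0..1} (\<lambda>t. g (linepath (cA \<eta> s) (cB \<eta> s) t) * (cB \<eta> s - cA \<eta> s))"

lemma side_facts:
  assumes "s < 4" "z \<in> closed_segment (cA \<eta> s) (cB \<eta> s)" "0 < \<eta>"
  shows "\<bar>Re z\<bar> \<le> 1 + \<eta>" "\<bar>Im z\<bar> \<le> \<eta>"
    "s = 0 \<Longrightarrow> Im z = -\<eta>" "s = 1 \<Longrightarrow> Re z = 1 + \<eta>" "s = 2 \<Longrightarrow> Im z = \<eta>" "s = 3 \<Longrightarrow> Re z = -(1+\<eta>)"
proof -
  have "s = 0 \<or> s = 1 \<or> s = 2 \<or> s = 3" using assms(1) by auto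
  then have "(Im z = -\<eta> \<and> \<bar>Re z\<bar> \<le> 1 + \<eta> \<and> s = 0) \<or> (Re z = 1 + \<eta> \<and> \<bar>Im z\<bar> \<le> \<eta> \<and> s = 1) \<or>
        (Im z = \<eta> \<and> \<bar>Re z\<bar> \<le> 1 + \<eta> \<and> s = 2) \<or> (Re z = -(1+\<eta>) \<and> \<bar>Im z\<bar> \<le> \<eta> \<and> s = 3)"
    using assms(2,3)
    by (auto simp: cA_def cB_def closed_segment_same_Im closed_segment_same_Re closed_segment_eq_real_ivl split: if_splits)
  then show "\<bar>Re z\<bar> \<le> 1 + \<eta>" "\<bar>Im z\<bar> \<le> \<eta>"
    "s = 0 \<Longrightarrow> Im z = -\<eta>" "s = 1 \<Longrightarrow> Re z = 1 + \<eta>" "s = 2 \<Longrightarrow> Im z = \<eta>" "s = 3 \<Longrightarrow> Re z = -(1+\<eta>)"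
    using assms(3) by auto
qed

lemma side_in_Rect: "s < 4 \<Longrightarrow> 0 < \<eta> \<Longrightarrow> closed_segment (cA \<eta> s) (cB \<eta> s) \<subseteq> Rect \<eta>"
  using side_facts(1,2) unfolding Rect_def by blast

lemma side_sep:
  assumes "s < 4" "z \<in> closed_segment (cA \<eta> s) (cB \<eta> s)" "0 < \<eta>" "\<eta> \<le> 1" "\<bar>r\<bar> \<le> 1"
  shows "Re (uu s * (z - of_real r)) \<ge> \<eta>" "cmod (z - of_real r) \<le> 4"
proof -
  note f = side_facts[OF assms(1-3)]
  have "s = 0 \<or> s = 1 \<or> s = 2 \<or> s = 3" using assms(1) by auto
  then show "Re (uu s * (z - of_real r)) \<ge> \<eta>"
    using f assms(5) by (auto simp: uu_def)
  have "cmod (z - of_real r) \<le> \<bar>Re (z - of_real r)\<bar> + \<bar>Im (z - of_real r)\<bar>" by (rule cmod_le)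
  also have "\<dots> \<le> 4" using f(1,2) assms(4,5) by simp
  finally show "cmod (z - of_real r) \<le> 4" .
qed

lemma norm_uu: "s < 4 \<Longrightarrow> cmod (uu s) = 1"
  by (auto simp: uu_def)

lemma contraction_bound:
  fixes y u :: complex
  assumes "Re (u * y) \<ge> \<eta>" "cmod y \<le> 4" "cmod u = 1" "0 < \<eta>" "\<eta> \<le> 1"
  shows "cmod (1 - of_real (\<eta>/16) * u * y) \<le> sqrt (1 - \<eta>^2/16)"
proof -
  define z where "z = u * y"
  have zn: "(Re z)^2 + (Im z)^2 \<le> 16"
  proof -
    have "cmod z \<le> 4" using assms(2,3) by (simp add: z_def norm_mult)
    then have "(cmod z)^2 \<le> 4^2" by (intro power_mono) auto
    then have "(cmod z)^2 \<le> 16" by simp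
    then show ?thesis by (simp add: cmod_power2)
  qed
  have rz: "Re z \<ge> \<eta>" using assms(1) by (simp add: z_def)
  have "(cmod (1 - of_real (\<eta>/16) * z))^2 = (1 - \<eta>/16 * Re z)^2 + (\<eta>/16 * Im z)^2"
    by (simp add: cmod_power2)
  also have "\<dots> = 1 - \<eta>/8 * Re z + (\<eta>/16)^2 * ((Re z)^2 + (Im z)^2)"
    by (simp add: power2_eq_square algebra_simps)
  also have "\<dots> \<le> 1 - \<eta>/8 * \<eta> + (\<eta>/16)^2 * 16"
  proof -
    have "\<eta>/8 * \<eta> \<le> \<eta>/8 * Re z" using rz assms(4) by (intro mult_left_mono) auto
    moreover have "(\<eta>/16)^2 * ((Re z)^2 + (Im z)^2) \<le> (\<eta>/16)^2 * 16" using zn by (intro mult_left_mono) auto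
    ultimately show ?thesis by linarith
  qed
  also have "\<dots> = 1 - \<eta>^2/16" by (simp add: power2_eq_square field_simps)
  finally have "(cmod (1 - of_real (\<eta>/16) * z))^2 \<le> 1 - \<eta>^2/16" .
  then show ?thesis unfolding z_def by (simp add: mult.assoc real_le_rsqrt)
qed

definition qq :: "real \<Rightarrow> real" where "qq \<eta> = sqrt (1 - \<eta>^2/16)"

lemma qq_bounds: "0 < \<eta> \<Longrightarrow> \<eta> \<le> 1 \<Longrightarrow> 0 < qq \<eta> \<and> qq \<eta> < 1"
  unfolding qq_def by (auto simp: power_le_one real_sqrt_lt_1_iff) (smt (verit) power_le_one zero_less_power)

lemma kernel_facts:
  assumes "s < 4" "z \<in> closed_segment (cA \<eta> s) (cB \<eta> s)" "0 < \<eta>" "\<eta> \<le> 1" "\<bar>r\<bar> \<le> 1"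
  shows "cmod (1 / (z - of_real r) - kerP d \<eta> s z (of_real r)) \<le> qq \<eta> ^ d / \<eta>"
        "cmod (kerP d \<eta> s z (of_real r)) \<le> 2 / \<eta>"
proof -
  define y where "y = z - of_real r"
  define a where "a = aa \<eta> s"
  define \<rho> where "\<rho> = 1 - a * y"
  have sep: "Re (uu s * y) \<ge> \<eta>" "cmod y \<le> 4" using side_sep[OF assms] by (auto simp: y_def)
  have cy: "cmod y \<ge> \<eta>"
  proof -
    have "Re (uu s * y) \<le> cmod (uu s * y)" by (rule complex_Re_le_cmod)
    also have "\<dots> = cmod y" using norm_uu[OF assms(1)] by (simp add: norm_mult)
    finally show ?thesis using sep by linarith
  qed
  then have y0: "y \<noteq> 0" using assms(3) by auto
  have a0: "a \<noteq> 0" using assms(1,3) by (auto simp: a_def aa_def uu_def)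
  have rho: "cmod \<rho> \<le> qq \<eta>"
    using contraction_bound[OF sep norm_uu[OF assms(1)] assms(3,4)]
    by (simp add: \<rho>_def a_def aa_def qq_def mult.assoc)
  have r1: "\<rho> \<noteq> 1" using a0 y0 by (simp add: \<rho>_def)
  have P: "kerP d \<eta> s z (of_real r) = (1 - \<rho>^d) / y"
  proof -
    have "kerP d \<eta> s z (of_real r) = a * ((1 - \<rho>^d) / (1 - \<rho>))"
      unfolding kerP_def a_def[symmetric] y_def[symmetric] \<rho>_def[symmetric]
      using sum_gp_strict[of \<rho> d] r1 by simp
    also have "\<dots> = (1 - \<rho>^d) / y" using a0 y0 by (simp add: \<rho>_def field_simps)
    finally show ?thesis .
  qed
  have qd: "cmod (\<rho>^d) \<le> qq \<eta> ^ d" unfolding norm_power by (intro power_mono rho) auto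
  have q1: "qq \<eta> ^ d \<le> 1" using qq_bounds[OF assms(3,4)] by (simp add: power_le_one)
  have "1 / y - kerP d \<eta> s z (of_real r) = \<rho>^d / y" using P y0 by (simp add: field_simps)
  then have "cmod (1 / y - kerP d \<eta> s z (of_real r)) = cmod (\<rho>^d) / cmod y" by (simp add: norm_divide)
  also have "\<dots> \<le> qq \<eta> ^ d / \<eta>"
    using qd cy assms(3) qq_bounds[OF assms(3,4)] by (intro frac_le) auto
  finally show "cmod (1 / (z - of_real r) - kerP d \<eta> s z (of_real r)) \<le> qq \<eta> ^ d / \<eta>" by (simp add: y_def)
  have "cmod (kerP d \<eta> s z (of_real r)) = cmod (1 - \<rho>^d) / cmod y" using P by (simp add: norm_divide)
  also have "\<dots> \<le> 2 / \<eta>"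
  proof (intro frac_le)
    have "cmod (1 - \<rho>^d) \<le> 1 + cmod (\<rho>^d)" by (metis norm_one norm_triangle_ineq4)
    then show "cmod (1 - \<rho>^d) \<le> 2" using qd q1 by linarith
  qed (use cy assms(3) in auto)
  finally show "cmod (kerP d \<eta> s z (of_real r)) \<le> 2 / \<eta>" .
qed

lemma kerP_expand: "kerP d \<eta> s z w = (\<Sum>l<d. ecoef d \<eta> s l z * w^l)"
proof -
  define a where "a = aa \<eta> s"
  have "kerP d \<eta> s z w = (\<Sum>k<d. \<Sum>l\<le>k. a * (of_nat (k choose l) * (a*w)^l * (1 - a*z)^(k-l)))"
    unfolding kerP_def a_def[symmetric] sum_distrib_left
  proof (rule sum.cong[OF refl])
    fix k
    have "(1 - a * (z - w))^k = ((a*w) + (1 - a*z))^k" by (simp add: algebra_simps)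
    also have "\<dots> = (\<Sum>l\<le>k. of_nat (k choose l) * (a*w)^l * (1 - a*z)^(k-l))" by (rule binomial_ring)
    finally show "a * (1 - a * (z - w))^k = (\<Sum>l\<le>k. a * (of_nat (k choose l) * (a*w)^l * (1 - a*z)^(k-l)))"
      by (simp add: sum_distrib_left)
  qed
  also have "\<dots> = (\<Sum>k<d. \<Sum>l<d. if l \<le> k then a * (of_nat (k choose l) * (a*w)^l * (1 - a*z)^(k-l)) else 0)"
  proof (rule sum.cong[OF refl])
    fix k assume "k \<in> {..<d}"
    then show "(\<Sum>l\<le>k. a * (of_nat (k choose l) * (a*w)^l * (1 - a*z)^(k-l))) =
       (\<Sum>l<d. if l \<le> k then a * (of_nat (k choose l) * (a*w)^l * (1 - a*z)^(k-l)) else 0)"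
      by (intro sum.mono_neutral_cong_left) auto
  qed
  also have "\<dots> = (\<Sum>l<d. \<Sum>k<d. if l \<le> k then a * (of_nat (k choose l) * (a*w)^l * (1 - a*z)^(k-l)) else 0)"
    by (rule sum.swap)
  also have "\<dots> = (\<Sum>l<d. ecoef d \<eta> s l z * w^l)"
  proof (rule sum.cong[OF refl])
    fix l assume "l \<in> {..<d}"
    have "(\<Sum>k<d. if l \<le> k then a * (of_nat (k choose l) * (a*w)^l * (1 - a*z)^(k-l)) else 0) =
          (\<Sum>k\<in>{l..<d}. a * (of_nat (k choose l) * (a*w)^l * (1 - a*z)^(k-l)))"
      by (intro sum.mono_neutral_cong_right) auto
    also have "\<dots> = ecoef d \<eta> s l z * w^l"
      unfolding ecoef_def a_def[symmetric] sum_distrib_right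
      by (rule sum.cong[OF refl]) (simp add: power_mult_distrib algebra_simps)
    finally show "(\<Sum>k<d. if l \<le> k then a * (of_nat (k choose l) * (a*w)^l * (1 - a*z)^(k-l)) else 0) = ecoef d \<eta> s l z * w^l" .
  qed
  finally show ?thesis .
qed

lemma continuous_on_ecoef: "continuous_on S (ecoef d \<eta> s l)"
  unfolding ecoef_def by (intro continuous_intros)



lemma ci_linepath:
  fixes a b :: complex
  assumes "f contour_integrable_on linepath a b"
  shows "contour_integral (linepath a b) f = integral {0..1} (\<lambda>t. f (linepath a b t) * (b - a))"
proof -
  have "((\<lambda>t. f (linepath a b t) * (b - a)) has_integral contour_integral (linepath a b) f) {0..1}"
    using has_contour_integral_integral[OF assms] has_contour_integral_linepath by blast
  then show ?thesis by (rule integral_unique[symmetric])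
qed

lemma seg_cont_comp:
  fixes a b c :: complex and h :: "complex \<Rightarrow> complex"
  assumes "continuous_on (closed_segment a b) h"
  shows "continuous_on {0..1} (\<lambda>t. h (linepath a b t) * c)"
proof -
  have "continuous_on {0..1} (\<lambda>t. h (linepath a b t))"
    by (rule continuous_on_compose2[OF assms continuous_on_linepath]) (auto simp: linepath_image_01)
  then show ?thesis by (intro continuous_intros)
qed

lemma seg_integrable:
  fixes a b c :: complex and h :: "complex \<Rightarrow> complex"
  shows "continuous_on (closed_segment a b) h \<Longrightarrow> (\<lambda>t. h (linepath a b t) * c) integrable_on {0..1}"
  using seg_cont_comp integrable_continuous_real by blast

lemma SI_diff:
  assumes "continuous_on (closed_segment (cA \<eta> s) (cB \<eta> s)) h1"
          "continuous_on (closed_segment (cA \<eta> s) (cB \<eta> s)) h2"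
  shows "SI \<eta> s (\<lambda>z. h1 z - h2 z) = SI \<eta> s h1 - SI \<eta> s h2"
proof -
  have "SI \<eta> s (\<lambda>z. h1 z - h2 z) = integral {0..1} (\<lambda>t. h1 (linepath (cA \<eta> s) (cB \<eta> s) t) * (cB \<eta> s - cA \<eta> s) - h2 (linepath (cA \<eta> s) (cB \<eta> s) t) * (cB \<eta> s - cA \<eta> s))"
    unfolding SI_def by (simp add: algebra_simps)
  also have "\<dots> = SI \<eta> s h1 - SI \<eta> s h2"
    unfolding SI_def by (rule integral_diff) (auto intro!: seg_integrable assms)
  finally show ?thesis .
qed

lemma SI_sum:
  assumes "finite K" "\<And>k. k \<in> K \<Longrightarrow> continuous_on (closed_segment (cA \<eta> s) (cB \<eta> s)) (h k)"
  shows "SI \<eta> s (\<lambda>z. \<Sum>k\<in>K. h k z) = (\<Sum>k\<in>K. SI \<eta> s (h k))"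
  unfolding SI_def sum_distrib_right
  by (rule integral_sum) (auto intro!: seg_integrable assms)

lemma SI_cmult: "SI \<eta> s (\<lambda>z. c * h z) = c * SI \<eta> s h"
  unfolding SI_def by (simp add: mult.assoc integral_mult_right)

lemma SI_cong: "s < 4 \<Longrightarrow> 0 < \<eta> \<Longrightarrow> (\<And>z. z \<in> Rect \<eta> \<Longrightarrow> h1 z = h2 z) \<Longrightarrow> SI \<eta> s h1 = SI \<eta> s h2"
  unfolding SI_def
  by (intro integral_cong) (metis linepath_in_path side_in_Rect subsetD)

lemma side_len: "s < 4 \<Longrightarrow> 0 < \<eta> \<Longrightarrow> cmod (cB \<eta> s - cA \<eta> s) \<le> 2 + 2 * \<eta>"
proof -
  assume "s < 4" "0 < \<eta>"
  then have "s = 0 \<or> s = 1 \<or> s = 2 \<or> s = 3" by auto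
  then show ?thesis using \<open>0 < \<eta>\<close>
    by (auto intro!: order_trans[OF cmod_le] simp: cA_def cB_def)
qed

lemma SI_bound:
  assumes "s < 4" "0 < \<eta>" "continuous_on (closed_segment (cA \<eta> s) (cB \<eta> s)) h"
    "\<And>z. z \<in> closed_segment (cA \<eta> s) (cB \<eta> s) \<Longrightarrow> cmod (h z) \<le> B"
  shows "cmod (SI \<eta> s h) \<le> B * (2 + 2 * \<eta>)"
proof -
  have "cmod (SI \<eta> s h) \<le> (B * cmod (cB \<eta> s - cA \<eta> s)) * (1 - 0)"
    unfolding SI_def
  proof (rule integral_bound)
    show "continuous_on {0..1} (\<lambda>t. h (linepath (cA \<eta> s) (cB \<eta> s) t) * (cB \<eta> s - cA \<eta> s))"
      by (rule seg_cont_comp[OF assms(3)])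
    fix t :: real assume "t \<in> {0..1}"
    then have "linepath (cA \<eta> s) (cB \<eta> s) t \<in> closed_segment (cA \<eta> s) (cB \<eta> s)"
      by (simp add: linepath_in_path)
    then show "cmod (h (linepath (cA \<eta> s) (cB \<eta> s) t) * (cB \<eta> s - cA \<eta> s)) \<le> B * cmod (cB \<eta> s - cA \<eta> s)"
      using assms(4) by (simp add: norm_mult mult_right_mono)
  qed simp
  also have "\<dots> \<le> B * (2 + 2 * \<eta>)"
  proof -
    obtain z where "z \<in> closed_segment (cA \<eta> s) (cB \<eta> s)" by (meson ends_in_segment(1))
    then have "B \<ge> 0" using assms(4) norm_ge_zero order_trans by blast
    then show ?thesis using side_len[OF assms(1,2)] by (simp add: mult_left_mono)
  qed
  finally show ?thesis .
qed

lemma SI_sum_bound: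
  assumes "0 < \<eta>" "\<eta> \<le> 1" "\<And>s. s < 4 \<Longrightarrow> continuous_on (closed_segment (cA \<eta> s) (cB \<eta> s)) (h s)"
    "\<And>s z. s < 4 \<Longrightarrow> z \<in> closed_segment (cA \<eta> s) (cB \<eta> s) \<Longrightarrow> cmod (h s z) \<le> B"
  shows "cmod ((\<Sum>s<4. SI \<eta> s (h s)) / (2 * pi * \<i>)) \<le> 3 * B"
proof -
  have B0: "B \<ge> 0"
    using assms(4)[of 0 "cA \<eta> 0"] by (meson ends_in_segment(1) norm_ge_zero order_trans zero_less_numeral)
  have "cmod (\<Sum>s<4. SI \<eta> s (h s)) \<le> (\<Sum>s<(4::nat). B * (2 + 2 * \<eta>))"
    by (rule order_trans[OF norm_sum sum_mono]) (auto intro!: SI_bound assms)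
  also have "\<dots> = 4 * B * (2 + 2 * \<eta>)" by simp
  also have "\<dots> \<le> 16 * B"
  proof -
    have "B * (2 + 2 * \<eta>) \<le> B * 4" by (rule mult_left_mono) (use assms B0 in auto)
    then show ?thesis by linarith
  qed
  finally have 1: "cmod (\<Sum>s<4. SI \<eta> s (h s)) \<le> 16 * B" .
  have "cmod ((\<Sum>s<4. SI \<eta> s (h s)) / (2 * pi * \<i>)) = cmod (\<Sum>s<4. SI \<eta> s (h s)) / (2 * pi)"
    by (simp add: norm_divide norm_mult)
  also have "\<dots> \<le> 16 * B / (2 * pi)" using 1 by (intro divide_right_mono) auto
  also have "\<dots> \<le> 3 * B"
  proof -
    have "B * 16 \<le> B * (6 * pi)" using pi_gt3 B0 by (intro mult_left_mono) auto
    then have "16 * B \<le> 3 * B * (2 * pi)" by (simp add: algebra_simps)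
    then show ?thesis by (simp add: divide_le_eq)
  qed
  finally show ?thesis .
qed

lemma rect_cbox: "0 < \<eta> \<Longrightarrow> cbox (cA \<eta> 0) (cA \<eta> 2) = Rect \<eta>"
  by (auto simp: Rect_def cA_def in_cbox_complex_iff abs_le_iff)

lemma rectpath_split:
  "rectpath (cA \<eta> 0) (cA \<eta> 2) = linepath (cA \<eta> 0) (cB \<eta> 0) +++ linepath (cA \<eta> 1) (cB \<eta> 1) +++
     linepath (cA \<eta> 2) (cB \<eta> 2) +++ linepath (cA \<eta> 3) (cB \<eta> 3)"
  by (simp add: rectpath_def Let_def cA_def cB_def)

lemma cauchy_rect:
  assumes "0 < \<eta>" "g holomorphic_on S" "open S" "convex S" "Rect \<eta> \<subseteq> S" "\<bar>r\<bar> \<le> 1"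
  shows "g (of_real r) = (\<Sum>s<4. SI \<eta> s (\<lambda>z. g z / (z - of_real r))) / (2 * pi * \<i>)"
proof -
  define w where "w = (of_real r :: complex)"
  define f where "f = (\<lambda>z. g z / (z - w))"
  have wbox: "w \<in> box (cA \<eta> 0) (cA \<eta> 2)"
    using assms(1,6) by (auto simp: w_def cA_def in_box_complex_iff)
  have le: "Re (cA \<eta> 0) \<le> Re (cA \<eta> 2)" "Im (cA \<eta> 0) \<le> Im (cA \<eta> 2)" using assms(1) by (auto simp: cA_def)
  have pim: "path_image (rectpath (cA \<eta> 0) (cA \<eta> 2)) = Rect \<eta> - box (cA \<eta> 0) (cA \<eta> 2)"
    using path_image_rectpath_cbox_minus_box[OF le] rect_cbox[OF assms(1)] by simp
  have "(f has_contour_integral (2 * pi * \<i> * winding_number (rectpath (cA \<eta> 0) (cA \<eta> 2)) w * g w))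
          (rectpath (cA \<eta> 0) (cA \<eta> 2))"
    unfolding f_def
  proof (rule Cauchy_integral_formula_convex_simple[OF assms(4,2)])
    show "w \<in> interior S" using assms(3,5) wbox rect_cbox[OF assms(1)] box_subset_cbox interior_open by blast
    show "path_image (rectpath (cA \<eta> 0) (cA \<eta> 2)) \<subseteq> S - {w}" using pim wbox assms(5) by auto
  qed auto
  then have HC: "(f has_contour_integral (2 * pi * \<i> * g w)) (rectpath (cA \<eta> 0) (cA \<eta> 2))"
    using winding_number_rectpath[OF wbox] by simp
  have contg: "continuous_on (Rect \<eta>) g"
    using assms(2,5) holomorphic_on_imp_continuous_on continuous_on_subset by blast
  have cont: "continuous_on (closed_segment (cA \<eta> s) (cB \<eta> s)) f" if "s < 4" for s :: nat
  proof -
    have seg: "closed_segment (cA \<eta> s) (cB \<eta> s) \<subseteq> path_image (rectpath (cA \<eta> 0) (cA \<eta> 2))"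
    proof -
      have "s = 0 \<or> s = 1 \<or> s = 2 \<or> s = 3" using that by auto
      then show ?thesis unfolding rectpath_split
        by (auto simp: path_image_join cA_def cB_def)
    qed
    have "\<forall>z\<in>closed_segment (cA \<eta> s) (cB \<eta> s). z - w \<noteq> 0" using seg pim wbox by auto
    then show ?thesis unfolding f_def
      using side_in_Rect[OF that assms(1)]
      by (intro continuous_intros continuous_on_subset[OF contg]) auto
  qed
  have ci: "f contour_integrable_on linepath (cA \<eta> s) (cB \<eta> s)" if "s < 4" for s :: nat
    by (rule contour_integrable_continuous_linepath[OF cont[OF that]])
  have "(f has_contour_integral
          (contour_integral (linepath (cA \<eta> 0) (cB \<eta> 0)) f + (contour_integral (linepath (cA \<eta> 1) (cB \<eta> 1)) f +
          (contour_integral (linepath (cA \<eta> 2) (cB \<eta> 2)) f + contour_integral (linepath (cA \<eta> 3) (cB \<eta> 3)) f))))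
         (rectpath (cA \<eta> 0) (cA \<eta> 2))"
    unfolding rectpath_split
    by (intro has_contour_integral_join has_contour_integral_integral ci valid_path_join)
       (auto simp: cA_def cB_def)
  then have "2 * pi * \<i> * g w = (\<Sum>s<4. contour_integral (linepath (cA \<eta> s) (cB \<eta> s)) f)"
    using HC has_contour_integral_unique by (simp add: numeral_eq_Suc add.assoc)
  also have "\<dots> = (\<Sum>s<4. SI \<eta> s f)"
    by (rule sum.cong[OF refl]) (simp add: ci_linepath ci SI_def)
  finally show ?thesis by (simp add: f_def w_def field_simps)
qed

lemma continuous_on_kerP: "continuous_on S (\<lambda>z. kerP d \<eta> s z w)"
  unfolding kerP_def by (intro continuous_intros)

lemma one_dim_error:
  assumes "0 < \<eta>" "\<eta> \<le> 1" "g holomorphic_on S" "open S" "convex S" "Rect \<eta> \<subseteq> S" "\<bar>r\<bar> \<le> 1"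
    "\<And>z. z \<in> Rect \<eta> \<Longrightarrow> cmod (g z) \<le> M"
  shows "cmod (g (of_real r) - (\<Sum>s<4. SI \<eta> s (\<lambda>z. g z * kerP d \<eta> s z (of_real r))) / (2 * pi * \<i>))
           \<le> 3 * (M * qq \<eta> ^ d / \<eta>)"
proof -
  define w where "w = (of_real r :: complex)"
  have M0: "0 \<le> M" using assms(8)[of 0] assms(1) by (auto simp: Rect_def intro: order_trans[OF norm_ge_zero])
  have contg: "continuous_on (Rect \<eta>) g"
    using assms(3,6) holomorphic_on_imp_continuous_on continuous_on_subset by blast
  have segw: "z - w \<noteq> 0" if "s < 4" "z \<in> closed_segment (cA \<eta> s) (cB \<eta> s)" for s :: nat and z
    using side_sep(1)[OF that assms(1,2,7)] assms(1) by (auto simp: w_def)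
  have c1: "continuous_on (closed_segment (cA \<eta> s) (cB \<eta> s)) (\<lambda>z. g z / (z - w))" if "s < 4" for s :: nat
    using side_in_Rect[OF that assms(1)] segw[OF that]
    by (intro continuous_intros continuous_on_subset[OF contg]) auto
  have c2: "continuous_on (closed_segment (cA \<eta> s) (cB \<eta> s)) (\<lambda>z. g z * kerP d \<eta> s z w)" if "s < 4" for s :: nat
    using side_in_Rect[OF that assms(1)]
    by (intro continuous_intros continuous_on_subset[OF contg] continuous_on_kerP) auto
  have "g w - (\<Sum>s<4. SI \<eta> s (\<lambda>z. g z * kerP d \<eta> s z w)) / (2 * pi * \<i>)
      = (\<Sum>s<4. SI \<eta> s (\<lambda>z. g z / (z - w)) - SI \<eta> s (\<lambda>z. g z * kerP d \<eta> s z w)) / (2 * pi * \<i>)"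
    using cauchy_rect[OF assms(1,3,4,5,6,7)] by (simp add: w_def sum_subtractf diff_divide_distrib)
  also have "\<dots> = (\<Sum>s<4. SI \<eta> s (\<lambda>z. g z * (1 / (z - w) - kerP d \<eta> s z w))) / (2 * pi * \<i>)"
  proof -
    have "SI \<eta> s (\<lambda>z. g z / (z - w)) - SI \<eta> s (\<lambda>z. g z * kerP d \<eta> s z w) =
          SI \<eta> s (\<lambda>z. g z * (1 / (z - w) - kerP d \<eta> s z w))" if "s < 4" for s :: nat
      by (subst SI_diff[OF c1[OF that] c2[OF that], symmetric]) (simp add: algebra_simps)
    then show ?thesis by simp
  qed
  also have "cmod \<dots> \<le> 3 * (M * qq \<eta> ^ d / \<eta>)"
  proof (rule SI_sum_bound[OF assms(1,2)])
    fix s :: nat assume s: "s < 4"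
    have "continuous_on (closed_segment (cA \<eta> s) (cB \<eta> s)) (\<lambda>z. g z / (z - w) - g z * kerP d \<eta> s z w)"
      by (intro continuous_intros c1 c2 s)
    then show "continuous_on (closed_segment (cA \<eta> s) (cB \<eta> s)) (\<lambda>z. g z * (1 / (z - w) - kerP d \<eta> s z w))"
      by (simp add: algebra_simps)
    fix z assume z: "z \<in> closed_segment (cA \<eta> s) (cB \<eta> s)"
    have "cmod (g z * (1 / (z - w) - kerP d \<eta> s z w)) = cmod (g z) * cmod (1 / (z - w) - kerP d \<eta> s z w)"
      by (simp add: norm_mult)
    also have "\<dots> \<le> M * (qq \<eta> ^ d / \<eta>)"
      using kernel_facts(1)[OF s z assms(1,2,7)] assms(8) side_in_Rect[OF s assms(1)] z M0
      by (intro mult_mono) (auto simp: w_def)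
    finally show "cmod (g z * (1 / (z - w) - kerP d \<eta> s z w)) \<le> M * qq \<eta> ^ d / \<eta>" by simp
  qed
  finally show ?thesis by (simp add: w_def)
qed



definition upd :: "complex^'i \<Rightarrow> 'i \<Rightarrow> complex \<Rightarrow> complex^'i" where
  "upd v j z = (\<chi> i. if i = j then z else v $ i)"

definition DD :: "real \<Rightarrow> (complex^'i) set" where
  "DD \<eta> = {v. \<forall>i. v $ i \<in> Rect \<eta>}"

definition Bop :: "nat \<Rightarrow> real \<Rightarrow> 'i \<Rightarrow> nat \<Rightarrow> (complex^'i \<Rightarrow> complex) \<Rightarrow> complex^'i \<Rightarrow> complex" where
  "Bop d \<eta> j l G v = (\<Sum>s<4. SI \<eta> s (\<lambda>z. G (upd v j z) * ecoef d \<eta> s l z)) / (2 * pi * \<i>)"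

definition Aop :: "nat \<Rightarrow> real \<Rightarrow> 'i \<Rightarrow> (complex^'i \<Rightarrow> complex) \<Rightarrow> complex^'i \<Rightarrow> complex" where
  "Aop d \<eta> j G v = (\<Sum>l<d. (v $ j)^l * Bop d \<eta> j l G v)"

fun approx :: "nat \<Rightarrow> real \<Rightarrow> (complex^'i \<Rightarrow> complex) \<Rightarrow> 'i list \<Rightarrow> complex^'i \<Rightarrow> complex" where
  "approx d \<eta> G [] = G"
| "approx d \<eta> G (j # js) = Aop d \<eta> j (approx d \<eta> G js)"

lemma upd_nth [simp]: "upd v j z $ i = (if i = j then z else v $ i)"
  by (simp add: upd_def)

lemma upd_upd [simp]: "upd (upd v j z) j z' = upd v j z'"
  by (simp add: upd_def vec_eq_iff)

lemma upd_same [simp]: "upd v j (v $ j) = v"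
  by (simp add: upd_def vec_eq_iff)

lemma upd_DD: "v \<in> DD \<eta> \<Longrightarrow> z \<in> Rect \<eta> \<Longrightarrow> upd v j z \<in> DD \<eta>"
  by (simp add: DD_def)

lemma continuous_on_upd:
  assumes "continuous_on S f" "continuous_on S g" shows "continuous_on S (\<lambda>x. upd (f x) j (g x))"
  unfolding upd_def
proof (intro continuous_on_vec_lambda)
  fix i show "continuous_on S (\<lambda>x. if i = j then g x else f x $ i)"
    by (cases "i = j") (auto intro: continuous_intros assms)
qed

lemma slice_cont:
  assumes "continuous_on (DD \<eta>) G" "v \<in> DD \<eta>" "T \<subseteq> Rect \<eta>"
  shows "continuous_on T (\<lambda>z. G (upd v j z))"
  by (rule continuous_on_compose2[OF assms(1) continuous_on_upd[OF continuous_on_const continuous_on_id]])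
     (use assms(2,3) upd_DD in blast)

lemma Bop_cont:
  assumes "continuous_on (DD \<eta>) G" "0 < \<eta>"
  shows "continuous_on (DD \<eta>) (Bop d \<eta> j l G)"
proof -
  have "continuous_on (DD \<eta>) (\<lambda>v. SI \<eta> s (\<lambda>z. G (upd v j z) * ecoef d \<eta> s l z))" if s: "s < 4" for s :: nat
  proof -
    define \<gamma> where "\<gamma> = linepath (cA \<eta> s) (cB \<eta> s)"
    have im: "\<gamma> t \<in> Rect \<eta>" if "t \<in> {0..1}" for t
      using side_in_Rect[OF s assms(2)] linepath_in_path[OF that] unfolding \<gamma>_def by blast
    have "continuous_on (DD \<eta> \<times> cbox 0 1) (\<lambda>(v, t). G (upd v j (\<gamma> t)) * ecoef d \<eta> s l (\<gamma> t) * (cB \<eta> s - cA \<eta> s))"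
    proof -
      have c1: "continuous_on (DD \<eta> \<times> cbox 0 1) (\<lambda>p. upd (fst p) j (\<gamma> (snd p)))"
        unfolding \<gamma>_def
        by (intro continuous_on_upd continuous_intros continuous_on_compose2[OF continuous_on_linepath]) auto
      have c2: "continuous_on (DD \<eta> \<times> cbox 0 1) (\<lambda>p. G (upd (fst p) j (\<gamma> (snd p))))"
        by (rule continuous_on_compose2[OF assms(1) c1]) (auto simp: cbox_interval intro!: upd_DD im)
      have c3: "continuous_on (DD \<eta> \<times> cbox 0 1) (\<lambda>p. ecoef d \<eta> s l (\<gamma> (snd p)))"
        unfolding \<gamma>_def
        by (intro continuous_on_compose2[OF continuous_on_ecoef] continuous_on_compose2[OF continuous_on_linepath] continuous_intros) auto
      show ?thesis
        using continuous_on_mult[OF continuous_on_mult[OF c2 c3] continuous_on_const[of _ "cB \<eta> s - cA \<eta> s"]]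
        by (simp add: case_prod_unfold)
    qed
    from integral_continuous_on_param[OF this]
    show ?thesis unfolding SI_def \<gamma>_def cbox_interval by simp
  qed
  then show ?thesis unfolding Bop_def by (intro continuous_intros) auto
qed

lemma Aop_cont:
  assumes "continuous_on (DD \<eta>) G" "0 < \<eta>"
  shows "continuous_on (DD \<eta>) (Aop d \<eta> j G)"
  unfolding Aop_def by (intro continuous_intros Bop_cont assms)

lemma approx_cont:
  assumes "continuous_on (DD \<eta>) G" "0 < \<eta>"
  shows "continuous_on (DD \<eta>) (approx d \<eta> G js)"
  by (induction js) (auto intro: Aop_cont assms)

lemma slice_seg_cont:
  assumes "continuous_on (DD \<eta>) G" "v \<in> DD \<eta>" "s < 4" "0 < \<eta>"
  shows "continuous_on (closed_segment (cA \<eta> s) (cB \<eta> s)) (\<lambda>z. G (upd v j z) * ecoef d \<eta> s l z)"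
  by (intro continuous_intros continuous_on_ecoef slice_cont[OF assms(1,2)] side_in_Rect assms(3,4))

lemma Bop_diff:
  assumes "continuous_on (DD \<eta>) G1" "continuous_on (DD \<eta>) G2" "v \<in> DD \<eta>" "0 < \<eta>"
  shows "Bop d \<eta> j l (\<lambda>u. G1 u - G2 u) v = Bop d \<eta> j l G1 v - Bop d \<eta> j l G2 v"
proof -
  have "SI \<eta> s (\<lambda>z. (G1 (upd v j z) - G2 (upd v j z)) * ecoef d \<eta> s l z) =
        SI \<eta> s (\<lambda>z. G1 (upd v j z) * ecoef d \<eta> s l z) - SI \<eta> s (\<lambda>z. G2 (upd v j z) * ecoef d \<eta> s l z)"
    if "s < 4" for s :: nat
    using SI_diff[OF slice_seg_cont[OF assms(1,3) that assms(4)] slice_seg_cont[OF assms(2,3) that assms(4)]]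
    by (simp add: algebra_simps)
  then show ?thesis unfolding Bop_def by (simp add: sum_subtractf diff_divide_distrib)
qed

lemma Aop_diff:
  assumes "continuous_on (DD \<eta>) G1" "continuous_on (DD \<eta>) G2" "v \<in> DD \<eta>" "0 < \<eta>"
  shows "Aop d \<eta> j (\<lambda>u. G1 u - G2 u) v = Aop d \<eta> j G1 v - Aop d \<eta> j G2 v"
  unfolding Aop_def Bop_diff[OF assms] by (simp add: algebra_simps sum_subtractf)

lemma Bop_sum:
  assumes "finite K" "\<And>k. k \<in> K \<Longrightarrow> continuous_on (DD \<eta>) (G k)" "v \<in> DD \<eta>" "0 < \<eta>"
  shows "Bop d \<eta> j l (\<lambda>u. \<Sum>k\<in>K. G k u) v = (\<Sum>k\<in>K. Bop d \<eta> j l (G k) v)"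
proof -
  have "SI \<eta> s (\<lambda>z. (\<Sum>k\<in>K. G k (upd v j z)) * ecoef d \<eta> s l z) =
        (\<Sum>k\<in>K. SI \<eta> s (\<lambda>z. G k (upd v j z) * ecoef d \<eta> s l z))"
    if "s < 4" for s :: nat
    using SI_sum[OF assms(1) slice_seg_cont[OF assms(2) assms(3) that assms(4)]]
    by (simp add: sum_distrib_right)
  then have "(\<Sum>s<4. SI \<eta> s (\<lambda>z. (\<Sum>k\<in>K. G k (upd v j z)) * ecoef d \<eta> s l z)) =
        (\<Sum>k\<in>K. \<Sum>s<4. SI \<eta> s (\<lambda>z. G k (upd v j z) * ecoef d \<eta> s l z))"
    by (simp add: sum.swap[of _ K])
  then show ?thesis unfolding Bop_def by (simp add: sum_divide_distrib)
qed

lemma Bop_cmult: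
  assumes "\<And>z. c (upd v j z) = c v"
  shows "Bop d \<eta> j l (\<lambda>u. c u * G u) v = c v * Bop d \<eta> j l G v"
proof -
  have "SI \<eta> s (\<lambda>z. c (upd v j z) * G (upd v j z) * ecoef d \<eta> s l z) = c v * SI \<eta> s (\<lambda>z. G (upd v j z) * ecoef d \<eta> s l z)" for s
    using SI_cmult[of \<eta> s "c v" "\<lambda>z. G (upd v j z) * ecoef d \<eta> s l z"] by (simp add: assms mult.assoc)
  then show ?thesis unfolding Bop_def by (simp add: sum_distrib_left)
qed

lemma Bop_cong:
  assumes "\<And>u. u \<in> DD \<eta> \<Longrightarrow> G1 u = G2 u" "v \<in> DD \<eta>" "0 < \<eta>"
  shows "Bop d \<eta> j l G1 v = Bop d \<eta> j l G2 v"
  unfolding Bop_def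
  by (intro arg_cong2[where f="(/)"] sum.cong refl SI_cong) (auto simp: assms upd_DD)

lemma Bop_upd: "Bop d \<eta> j l G (upd v j z) = Bop d \<eta> j l G v"
  by (simp add: Bop_def)

lemma Aop_kernel:
  assumes "continuous_on (DD \<eta>) G" "v \<in> DD \<eta>" "0 < \<eta>"
  shows "Aop d \<eta> j G v = (\<Sum>s<4. SI \<eta> s (\<lambda>z. G (upd v j z) * kerP d \<eta> s z (v $ j))) / (2 * pi * \<i>)"
proof -
  have "Aop d \<eta> j G v = (\<Sum>l<d. \<Sum>s<4. SI \<eta> s (\<lambda>z. (v $ j)^l * (G (upd v j z) * ecoef d \<eta> s l z))) / (2 * pi * \<i>)"
    unfolding Aop_def Bop_def by (simp add: SI_cmult sum_divide_distrib sum_distrib_left)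
  also have "\<dots> = (\<Sum>s<4. \<Sum>l<d. SI \<eta> s (\<lambda>z. (v $ j)^l * (G (upd v j z) * ecoef d \<eta> s l z))) / (2 * pi * \<i>)"
    by (subst sum.swap) simp
  also have "\<dots> = (\<Sum>s<4. SI \<eta> s (\<lambda>z. \<Sum>l<d. (v $ j)^l * (G (upd v j z) * ecoef d \<eta> s l z))) / (2 * pi * \<i>)"
  proof -
    have "(\<Sum>l<d. SI \<eta> s (\<lambda>z. (v $ j)^l * (G (upd v j z) * ecoef d \<eta> s l z))) =
          SI \<eta> s (\<lambda>z. \<Sum>l<d. (v $ j)^l * (G (upd v j z) * ecoef d \<eta> s l z))" if "s < 4" for s :: nat
      using side_in_Rect[OF that assms(3)]
      by (intro SI_sum[symmetric]) (auto intro!: continuous_intros continuous_on_ecoef slice_cont[OF assms(1,2)])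
    then show ?thesis by simp
  qed
  also have "\<dots> = (\<Sum>s<4. SI \<eta> s (\<lambda>z. G (upd v j z) * kerP d \<eta> s z (v $ j))) / (2 * pi * \<i>)"
    by (simp add: kerP_expand sum_distrib_left algebra_simps)
  finally show ?thesis .
qed

lemma Aop_error:
  fixes v :: "complex^'i"
  assumes "continuous_on (DD \<eta>) G" "v \<in> DD \<eta>" "0 < \<eta>" "\<eta> \<le> 1" "v $ j = of_real r" "\<bar>r\<bar> \<le> 1"
    "(\<lambda>z. G (upd v j z)) holomorphic_on S" "open S" "convex S" "Rect \<eta> \<subseteq> S"
    "\<And>u. u \<in> DD \<eta> \<Longrightarrow> cmod (G u) \<le> M"
  shows "cmod (G v - Aop d \<eta> j G v) \<le> 3 * (M * qq \<eta> ^ d / \<eta>)"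
proof -
  have "cmod ((\<lambda>z. G (upd v j z)) (of_real r) - (\<Sum>s<4. SI \<eta> s (\<lambda>z. G (upd v j z) * kerP d \<eta> s z (of_real r))) / (2 * pi * \<i>))
           \<le> 3 * (M * qq \<eta> ^ d / \<eta>)"
    by (rule one_dim_error[OF assms(3,4,7,8,9,10,6)]) (auto intro!: assms(11) upd_DD assms(2))
  moreover have "(\<lambda>z. G (upd v j z)) (of_real r) = G v" using assms(5) by (metis upd_same)
  ultimately show ?thesis using Aop_kernel[OF assms(1,2,3)] assms(5) by simp
qed

lemma Aop_bound:
  fixes v :: "complex^'i"
  assumes "continuous_on (DD \<eta>) G" "v \<in> DD \<eta>" "0 < \<eta>" "\<eta> \<le> 1" "v $ j = of_real r" "\<bar>r\<bar> \<le> 1"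
    "\<And>z. z \<in> Rect \<eta> \<Longrightarrow> cmod (G (upd v j z)) \<le> B"
  shows "cmod (Aop d \<eta> j G v) \<le> 3 * (B * (2 / \<eta>))"
  unfolding Aop_kernel[OF assms(1,2,3)]
proof (rule SI_sum_bound[OF assms(3,4)])
  fix s :: nat assume s: "s < 4"
  show "continuous_on (closed_segment (cA \<eta> s) (cB \<eta> s)) (\<lambda>z. G (upd v j z) * kerP d \<eta> s z (v $ j))"
    by (intro continuous_intros continuous_on_kerP slice_cont[OF assms(1,2)] side_in_Rect s assms(3))
  fix z assume z: "z \<in> closed_segment (cA \<eta> s) (cB \<eta> s)"
  have zR: "z \<in> Rect \<eta>" using side_in_Rect[OF s assms(3)] z by blast
  have B0: "0 \<le> B" using assms(7)[OF zR] norm_ge_zero order_trans by blast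
  show "cmod (G (upd v j z) * kerP d \<eta> s z (v $ j)) \<le> B * (2 / \<eta>)"
    unfolding norm_mult assms(5)
    by (intro mult_mono assms(7) zR kernel_facts(2)[OF s z assms(3,4,6)] B0) auto
qed



lemma approx_error:
  fixes F :: "complex^'i \<Rightarrow> complex"
  assumes cont: "continuous_on (DD \<eta>) F" and eta: "0 < \<eta>" "\<eta> \<le> 1"
    and hol: "\<And>v j. v \<in> DD \<eta> \<Longrightarrow> (\<lambda>z. F (upd v j z)) holomorphic_on S"
    and S: "open S" "convex S" "Rect \<eta> \<subseteq> S"
    and bnd: "\<And>u. u \<in> DD \<eta> \<Longrightarrow> cmod (F u) \<le> M"
  shows "distinct js \<Longrightarrow> v \<in> DD \<eta> \<Longrightarrow> (\<forall>i\<in>set js. \<exists>r. v $ i = of_real r \<and> \<bar>r\<bar> \<le> 1) \<Longrightarrow>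
    cmod (F v - approx d \<eta> F js v) \<le> 3 * (M * qq \<eta> ^ d / \<eta>) * (\<Sum>k<length js. (6 / \<eta>)^k)"
proof (induction js arbitrary: v)
  case Nil then show ?case by simp
next
  case (Cons j js)
  define c where "c = 3 * (M * qq \<eta> ^ d / \<eta>)"
  define E where "E = c * (\<Sum>k<length js. (6 / \<eta>)^k)"
  obtain r where r: "v $ j = of_real r" "\<bar>r\<bar> \<le> 1" using Cons.prems(3) by auto
  have ca: "continuous_on (DD \<eta>) (approx d \<eta> F js)" by (rule approx_cont[OF cont eta(1)])
  have "F v - approx d \<eta> F (j # js) v = (F v - Aop d \<eta> j F v) + Aop d \<eta> j (\<lambda>u. F u - approx d \<eta> F js u) v"
    using Aop_diff[OF cont ca Cons.prems(2) eta(1)] by simp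
  also have "cmod \<dots> \<le> c + 3 * (E * (2 / \<eta>))"
  proof (rule norm_triangle_le[OF add_mono])
    show "cmod (F v - Aop d \<eta> j F v) \<le> c"
      unfolding c_def by (rule Aop_error[OF cont Cons.prems(2) eta r hol[OF Cons.prems(2)] S bnd])
    show "cmod (Aop d \<eta> j (\<lambda>u. F u - approx d \<eta> F js u) v) \<le> 3 * (E * (2 / \<eta>))"
    proof (rule Aop_bound[OF _ Cons.prems(2) eta r])
      show "continuous_on (DD \<eta>) (\<lambda>u. F u - approx d \<eta> F js u)" by (intro continuous_intros cont ca)
      fix z assume z: "z \<in> Rect \<eta>"
      show "cmod (F (upd v j z) - approx d \<eta> F js (upd v j z)) \<le> E"
        unfolding E_def c_def
      proof (rule Cons.IH)
        show "distinct js" using Cons.prems(1) by simp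
        show "upd v j z \<in> DD \<eta>" by (rule upd_DD[OF Cons.prems(2) z])
        show "\<forall>i\<in>set js. \<exists>r. upd v j z $ i = complex_of_real r \<and> \<bar>r\<bar> \<le> 1"
          using Cons.prems(1,3) by auto
      qed
    qed
  qed
  also have "\<dots> = c * (\<Sum>k<length (j # js). (6 / \<eta>)^k)"
    unfolding E_def using eta(1)
    by (simp add: sum.lessThan_Suc_shift sum_distrib_left algebra_simps del: sum.lessThan_Suc)
  finally show ?case unfolding c_def .
qed

lemma upd_comm: "i \<noteq> j \<Longrightarrow> upd (upd v i z) j w = upd (upd v j w) i z"
  by (simp add: vec_eq_iff)

lemma Bop_agree: "(\<And>z. G (upd v j z) = G (upd w j z)) \<Longrightarrow> Bop d \<eta> j l G v = Bop d \<eta> j l G w"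
  unfolding Bop_def by simp

lemma approx_struct:
  fixes F :: "complex^'i \<Rightarrow> complex"
  assumes cont: "continuous_on (DD \<eta>) F" and eta: "0 < \<eta>"
  shows "distinct js \<Longrightarrow> \<exists>K C. finite K \<and> (\<forall>\<kappa>\<in>K. \<forall>i. i \<notin> set js \<longrightarrow> \<kappa> i = 0) \<and>
     (\<forall>\<kappa>\<in>K. \<forall>i\<in>set js. \<kappa> i < d) \<and> (\<forall>\<kappa>\<in>K. continuous_on (DD \<eta>) (C \<kappa>)) \<and>
     (\<forall>\<kappa>\<in>K. \<forall>v w. (\<forall>i. i \<notin> set js \<longrightarrow> v $ i = w $ i) \<longrightarrow> C \<kappa> v = C \<kappa> w) \<and>
     (\<forall>v\<in>DD \<eta>. approx d \<eta> F js v = (\<Sum>\<kappa>\<in>K. C \<kappa> v * (\<Prod>i\<in>set js. (v $ i)^(\<kappa> i))))"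
proof (induction js)
  case Nil
  show ?case
    by (rule exI[of _ "{\<lambda>_. 0}"], rule exI[of _ "\<lambda>_. F"]) (auto simp: cont, metis vec_eq_iff)
next
  case (Cons j js)
  then have jn: "j \<notin> set js" and dj: "distinct js" by auto
  obtain K C where K: "finite K" "\<forall>\<kappa>\<in>K. \<forall>i. i \<notin> set js \<longrightarrow> \<kappa> i = 0" "\<forall>\<kappa>\<in>K. \<forall>i\<in>set js. \<kappa> i < d"
    "\<forall>\<kappa>\<in>K. continuous_on (DD \<eta>) (C \<kappa>)"
    "\<forall>\<kappa>\<in>K. \<forall>v w. (\<forall>i. i \<notin> set js \<longrightarrow> v $ i = w $ i) \<longrightarrow> C \<kappa> v = C \<kappa> w"
    "\<forall>v\<in>DD \<eta>. approx d \<eta> F js v = (\<Sum>\<kappa>\<in>K. C \<kappa> v * (\<Prod>i\<in>set js. (v $ i)^(\<kappa> i)))"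
    using Cons.IH[OF dj] by (elim exE conjE) (rule that; assumption)
  define mono where "mono \<kappa> v = (\<Prod>i\<in>set js. (v $ i)^(\<kappa> i))" for \<kappa> and v :: "complex^'i"
  define emb where "emb = (\<lambda>(l::nat, \<kappa>::'i \<Rightarrow> nat). \<kappa>(j := l))"
  define K' where "K' = emb ` ({..<d} \<times> K)"
  define C' where "C' \<kappa>' = Bop d \<eta> j (\<kappa>' j) (C (\<kappa>'(j := 0)))" for \<kappa>'
  have kj0: "\<kappa> j = 0" if "\<kappa> \<in> K" for \<kappa> using K(2) jn that by blast
  have inj: "inj_on emb ({..<d} \<times> K)"
  proof (rule inj_onI)
    fix p1 p2 assume p1: "p1 \<in> {..<d} \<times> K" and p2: "p2 \<in> {..<d} \<times> K" and e: "emb p1 = emb p2"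
    obtain l \<kappa> where l: "p1 = (l, \<kappa>)" by (cases p1)
    obtain l2 \<kappa>2 where l2: "p2 = (l2, \<kappa>2)" by (cases p2)
    have e2: "\<kappa>(j := l) = \<kappa>2(j := l2)" using e by (simp add: emb_def l l2)
    have "l = l2" using fun_cong[OF e2, of j] by simp
    moreover have "\<kappa> = \<kappa>2"
    proof
      fix i show "\<kappa> i = \<kappa>2 i"
      proof (cases "i = j")
        case True then show ?thesis using kj0[of \<kappa>] kj0[of \<kappa>2] p1 p2 l l2 by auto
      next
        case False then show ?thesis using fun_cong[OF e2, of i] by simp
      qed
    qed
    ultimately show "p1 = p2" using l l2 by simp
  qed
  have monocont: "continuous_on (DD \<eta>) (mono \<kappa>)" for \<kappa>
    unfolding mono_def by (intro continuous_intros)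
  have monoupd: "mono \<kappa> (upd v j z) = mono \<kappa> v" for \<kappa> v z
    unfolding mono_def using jn by (intro prod.cong) auto
  show ?case
  proof (intro exI conjI ballI allI impI)
    show "finite K'" unfolding K'_def using K(1) by auto
  next
    fix \<kappa>' i assume "\<kappa>' \<in> K'" "i \<notin> set (j # js)"
    then show "\<kappa>' i = 0" unfolding K'_def emb_def using K(2) by auto
  next
    fix \<kappa>' i assume "\<kappa>' \<in> K'" "i \<in> set (j # js)"
    then show "\<kappa>' i < d" unfolding K'_def emb_def using K(3) by auto
  next
    fix \<kappa>' assume "\<kappa>' \<in> K'"
    then obtain l \<kappa> where "l < d" "\<kappa> \<in> K" "\<kappa>' = \<kappa>(j := l)" unfolding K'_def emb_def by auto
    then show "continuous_on (DD \<eta>) (C' \<kappa>')"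
      unfolding C'_def using kj0 K(4) by (auto intro!: Bop_cont eta simp: fun_upd_idem)
  next
    fix \<kappa>' and v w :: "complex^'i" assume "\<kappa>' \<in> K'" and agree: "\<forall>i. i \<notin> set (j # js) \<longrightarrow> v $ i = w $ i"
    then obtain l \<kappa> where lk: "l < d" "\<kappa> \<in> K" "\<kappa>' = \<kappa>(j := l)" unfolding K'_def emb_def by auto
    have "C \<kappa> (upd v j z) = C \<kappa> (upd w j z)" for z
      using K(5) lk(2) agree by (auto simp: upd_def)
    then show "C' \<kappa>' v = C' \<kappa>' w"
      unfolding C'_def using lk kj0 by (auto intro!: Bop_agree simp: fun_upd_idem)
  next
    fix v :: "complex^'i" assume v: "v \<in> DD \<eta>"
    have "approx d \<eta> F (j # js) v = (\<Sum>l<d. (v $ j)^l * Bop d \<eta> j l (approx d \<eta> F js) v)"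
      by (simp add: Aop_def)
    also have "\<dots> = (\<Sum>l<d. (v $ j)^l * (\<Sum>\<kappa>\<in>K. mono \<kappa> v * Bop d \<eta> j l (C \<kappa>) v))"
    proof (rule sum.cong[OF refl])
      fix l
      have "Bop d \<eta> j l (approx d \<eta> F js) v = Bop d \<eta> j l (\<lambda>u. \<Sum>\<kappa>\<in>K. mono \<kappa> u * C \<kappa> u) v"
        by (rule Bop_cong[OF _ v eta]) (simp add: K(6) mono_def mult.commute)
      also have "\<dots> = (\<Sum>\<kappa>\<in>K. Bop d \<eta> j l (\<lambda>u. mono \<kappa> u * C \<kappa> u) v)"
        by (rule Bop_sum[OF K(1) _ v eta]) (auto intro!: continuous_intros monocont K(4)[rule_format])
      also have "\<dots> = (\<Sum>\<kappa>\<in>K. mono \<kappa> v * Bop d \<eta> j l (C \<kappa>) v)"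
        by (rule sum.cong[OF refl], rule Bop_cmult) (rule monoupd)
      finally show "(v $ j)^l * Bop d \<eta> j l (approx d \<eta> F js) v = (v $ j)^l * (\<Sum>\<kappa>\<in>K. mono \<kappa> v * Bop d \<eta> j l (C \<kappa>) v)"
        by simp
    qed
    also have "\<dots> = (\<Sum>l<d. \<Sum>\<kappa>\<in>K. C' (emb (l, \<kappa>)) v * (\<Prod>i\<in>set (j # js). (v $ i)^(emb (l, \<kappa>) i)))"
      unfolding sum_distrib_left
    proof (intro sum.cong refl)
      fix l \<kappa> assume "\<kappa> \<in> K"
      then have k0: "\<kappa> j = 0" by (rule kj0)
      have p: "(\<Prod>i\<in>set (j # js). (v $ i)^(emb (l, \<kappa>) i)) = (v $ j)^l * mono \<kappa> v"
      proof -
        have "(\<Prod>i\<in>set (j # js). (v $ i)^(emb (l, \<kappa>) i)) = (v $ j)^l * (\<Prod>i\<in>set js. (v $ i)^(emb (l, \<kappa>) i))"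
          using jn by (simp add: emb_def)
        also have "(\<Prod>i\<in>set js. (v $ i)^(emb (l, \<kappa>) i)) = mono \<kappa> v"
          unfolding mono_def emb_def using jn by (intro prod.cong) auto
        finally show ?thesis .
      qed
      have "C' (emb (l, \<kappa>)) = Bop d \<eta> j l (C \<kappa>)"
        unfolding C'_def emb_def using k0 by (simp add: fun_upd_idem)
      then show "(v $ j)^l * (mono \<kappa> v * Bop d \<eta> j l (C \<kappa>) v) =
          C' (emb (l, \<kappa>)) v * (\<Prod>i\<in>set (j # js). (v $ i)^(emb (l, \<kappa>) i))"
        using p by (simp add: algebra_simps)
    qed
    also have "\<dots> = (\<Sum>p\<in>{..<d} \<times> K. C' (emb p) v * (\<Prod>i\<in>set (j # js). (v $ i)^(emb p i)))"
      by (subst sum.cartesian_product) (simp add: case_prod_unfold)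
    also have "\<dots> = (\<Sum>\<kappa>'\<in>K'. C' \<kappa>' v * (\<Prod>i\<in>set (j # js). (v $ i)^(\<kappa>' i)))"
      unfolding K'_def by (subst sum.reindex[OF inj]) simp
    finally show "approx d \<eta> F (j # js) v = (\<Sum>\<kappa>'\<in>K'. C' \<kappa>' v * (\<Prod>i\<in>set (j # js). (v $ i)^(\<kappa>' i)))" .
  qed
qed



definition Phi :: "complex^('n::finite + 'm::finite) \<Rightarrow> (complex^'n) \<times> (complex^'m)" where
  "Phi v = ((\<chi> a. v $ Inl a), (\<chi> b. v $ Inr b))"

definition Psi :: "real^'n::finite \<Rightarrow> real^'m::finite \<Rightarrow> complex^('n + 'm)" where
  "Psi x w = (\<chi> i. case i of Inl a \<Rightarrow> of_real (x $ a) | Inr b \<Rightarrow> of_real (w $ b))"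

definition remb :: "real^'i \<Rightarrow> complex^'i" where
  "remb r = (\<chi> i. of_real (r $ i))"

lemma linear_Phi: "linear Phi"
  by (rule linearI) (auto simp: Phi_def vec_eq_iff)

lemma bl_Phi: "bounded_linear Phi"
  using linear_Phi linear_conv_bounded_linear by blast

lemma Phi_Psi: "Phi (Psi x w) = (cemb x, cemb w)"
  by (simp add: Phi_def Psi_def cemb_def vec_eq_iff)

lemma remb_cont: "continuous_on S remb"
  unfolding remb_def by (intro continuous_on_vec_lambda continuous_intros)

lemma Phi_real_region: "Phi (remb r) \<in> region t"
proof -
  have "Re ((\<Sum>i\<in>UNIV. ((fst (Phi (remb r))) $ i)^2) + (\<Sum>j\<in>UNIV. ((snd (Phi (remb r))) $ j)^2))
      = (\<Sum>i\<in>UNIV. (r $ Inl i)^2) + (\<Sum>j\<in>UNIV. (r $ Inr j)^2)"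
    by (simp add: Phi_def remb_def Re_sum power2_eq_square)
  also have "\<dots> \<ge> 0" by (intro add_nonneg_nonneg sum_nonneg) auto
  finally show ?thesis unfolding region_def
    by (auto simp: case_prod_unfold) (smt (verit) zero_le_power2)
qed

lemma compact_cube2: "compact (remb ` cbox (-2 :: real^'i) 2)"
  by (intro compact_continuous_image remb_cont compact_cbox)

lemma DD_closed: "closed (DD \<eta> :: (complex^'i::finite) set)"
proof -
  have R: "closed (Rect \<eta>)"
    unfolding Rect_def by (intro closed_Collect_conj closed_Collect_le continuous_intros)
  have "DD \<eta> = (\<Inter>i. (\<lambda>v. v $ i) -` Rect \<eta>)" by (auto simp: DD_def)
  moreover have "closed ((\<lambda>v. v $ i) -` Rect \<eta>)" for i :: 'i
    by (rule closed_vimage[OF R]) (intro continuous_intros)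
  ultimately show ?thesis by (metis closed_INT)
qed

lemma DD_bounded: "bounded (DD \<eta> :: (complex^'i) set)"
proof -
  have "norm v \<le> real CARD('i) * (1 + 2 * \<bar>\<eta>\<bar>)" if "v \<in> DD \<eta>" for v :: "complex^'i"
  proof -
    have "norm v \<le> (\<Sum>i\<in>UNIV. cmod (v $ i))" unfolding norm_vec_def by (rule L2_set_le_sum) simp
    also have "\<dots> \<le> (\<Sum>i\<in>(UNIV::'i set). 1 + 2 * \<bar>\<eta>\<bar>)"
    proof (rule sum_mono)
      fix i have "v $ i \<in> Rect \<eta>" using that by (simp add: DD_def)
      then show "cmod (v $ i) \<le> 1 + 2 * \<bar>\<eta>\<bar>"
        using cmod_le[of "v $ i"] by (auto simp: Rect_def)
    qed
    finally show ?thesis by simp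
  qed
  then show ?thesis unfolding bounded_iff by blast
qed

lemma DD_compact: "compact (DD \<eta>)"
  using DD_closed DD_bounded compact_eq_bounded_closed by blast

lemma cmod_Re_diff: "cmod (of_real (Re z) - z) = \<bar>Im z\<bar>"
  by (simp add: cmod_def)

lemma norm_vec_le_sum: "norm (v :: complex^'i::finite) \<le> (\<Sum>i\<in>UNIV. cmod (v $ i))"
  unfolding norm_vec_def by (rule L2_set_le_sum) simp

lemma prep_data:
  fixes f :: "real^'n::finite \<Rightarrow> real^'m::finite \<Rightarrow> real"
  assumes "analytic_ext t f"
  shows "\<exists>(F :: complex^('n+'m) \<Rightarrow> complex) \<eta> S M. 0 < \<eta> \<and> \<eta> \<le> 1 \<and> open S \<and> convex S \<and> Rect \<eta> \<subseteq> S \<and>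
     continuous_on (DD \<eta>) F \<and> (\<forall>v\<in>DD \<eta>. \<forall>j. (\<lambda>z. F (upd v j z)) holomorphic_on S) \<and>
     (\<forall>u\<in>DD \<eta>. cmod (F u) \<le> M) \<and> (\<forall>x\<in>cube. \<forall>w\<in>cube. F (Psi x w) = of_real (f x w))"
proof -
  obtain G U where U: "open U" "region t \<subseteq> U" "cholomorphic_on G U"
    and agree: "\<forall>x\<in>cube. \<forall>w\<in>cube. G (cemb x, cemb w) = complex_of_real (f x w)"
    using assms unfolding analytic_ext_def by blast
  define U' where "U' = Phi -` U"
  have oU': "open U'" unfolding U'_def
    by (rule open_vimage[OF U(1)]) (rule linear_continuous_on[OF bl_Phi])
  define K0 where "K0 = remb ` cbox (-2 :: real^('n+'m)) 2"
  have K0U: "K0 \<subseteq> U'" using Phi_real_region U(2) by (auto simp: K0_def U'_def)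
  have K0ne: "K0 \<noteq> {}"
  proof -
    have "(0 :: real^('n+'m)) \<in> cbox (-2) 2" by (simp add: mem_box_cart)
    then show ?thesis unfolding K0_def by blast
  qed
  obtain \<delta> where \<delta>: "\<delta> > 0" "\<And>p y. p \<in> K0 \<Longrightarrow> dist p y < \<delta> \<Longrightarrow> y \<in> U'"
  proof (cases "-U' = {}")
    case True then show ?thesis using that[of 1] by auto
  next
    case False
    have pos: "0 < setdist K0 (-U')"
      using compact_cube2 oU' K0U False K0ne unfolding K0_def
      by (subst setdist_gt_0_compact_closed) (auto simp: closed_Compl)
    show ?thesis
    proof (rule that[OF pos])
      fix p y assume "p \<in> K0" "dist p y < setdist K0 (-U')"
      then show "y \<in> U'" using setdist_le_dist[of p K0 y "-U'"] by force
    qed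
  qed
  define N where "N = real CARD('n + 'm)"
  define \<eta> where "\<eta> = min (1/2) (\<delta> / (4 * (N + 1)))"
  have N0: "N \<ge> 0" by (simp add: N_def)
  have eta0: "0 < \<eta>" using \<delta>(1) N0 by (simp add: \<eta>_def)
  have eta1: "\<eta> \<le> 1/2" unfolding \<eta>_def by (rule min.cobounded1)
  have etad: "N * (2 * \<eta>) < \<delta>"
  proof -
    have "\<eta> \<le> \<delta> / (4 * (N + 1))" by (simp add: \<eta>_def)
    then have a: "\<eta> * (4 * (N + 1)) \<le> \<delta>" using N0 by (subst (asm) pos_le_divide_eq) auto
    have p: "0 \<le> \<eta> * N" using eta0 N0 by simp
    have "N * (2 * \<eta>) < \<eta> * (4 * (N + 1))" using p eta0 by (simp add: algebra_simps)
    then show ?thesis using a by linarith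
  qed
  define S where "S = box (Complex (-(1 + 2*\<eta>)) (-2*\<eta>)) (Complex (1 + 2*\<eta>) (2*\<eta>))"
  define W where "W = {u :: complex^('n+'m). \<forall>i. \<bar>Re (u$i)\<bar> \<le> 1 + 2*\<eta> \<and> \<bar>Im (u$i)\<bar> \<le> 2*\<eta>}"
  have WU: "W \<subseteq> U'"
  proof
    fix u assume u: "u \<in> W"
    define r where "r = ((\<chi> i. Re (u $ i)) :: real^('n+'m))"
    have "-2 \<le> Re (u $ i) \<and> Re (u $ i) \<le> 2" for i
    proof -
      have "\<bar>Re (u $ i)\<bar> \<le> 1 + 2 * \<eta>" using u unfolding W_def by blast
      then show ?thesis using eta1 by linarith
    qed
    then have "r \<in> cbox (-2) 2" by (simp add: mem_box_cart r_def)
    then have rK: "remb r \<in> K0" by (simp add: K0_def)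
    have "dist (remb r) u \<le> (\<Sum>i\<in>UNIV. cmod ((remb r - u) $ i))" unfolding dist_norm by (rule norm_vec_le_sum)
    also have "\<dots> = (\<Sum>i\<in>UNIV. \<bar>Im (u $ i)\<bar>)" by (simp add: remb_def r_def cmod_Re_diff)
    also have "\<dots> \<le> (\<Sum>i\<in>(UNIV::('n+'m) set). 2 * \<eta>)" using u by (intro sum_mono) (auto simp: W_def)
    also have "\<dots> = N * (2 * \<eta>)" by (simp add: N_def)
    finally have "dist (remb r) u < \<delta>" using etad by linarith
    then show "u \<in> U'" using \<delta>(2)[OF rK] by blast
  qed
  have DDW: "DD \<eta> \<subseteq> W"
  proof
    fix x :: "complex^('n+'m)" assume "x \<in> DD \<eta>"
    then have hx: "\<bar>Re (x $ i)\<bar> \<le> 1 + \<eta> \<and> \<bar>Im (x $ i)\<bar> \<le> \<eta>" for i by (auto simp: DD_def Rect_def)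
    have "\<bar>Re (x $ i)\<bar> \<le> 1 + 2 * \<eta> \<and> \<bar>Im (x $ i)\<bar> \<le> 2 * \<eta>" for i
      using hx[of i] eta0 by linarith
    then show "x \<in> W" unfolding W_def by blast
  qed
  have updW: "upd v j z \<in> W" if "v \<in> DD \<eta>" "z \<in> S" for v j z
    using that DDW eta0 by (auto simp: W_def S_def in_box_complex_iff DD_def Rect_def)
  have RS: "Rect \<eta> \<subseteq> S" using eta0 by (auto simp: Rect_def S_def in_box_complex_iff)
  define F where "F = (\<lambda>v. G (Phi v))"
  have derivG: "\<exists>D. (G has_derivative D) (at (Phi u)) \<and> (\<forall>v. D (cmul \<i> v) = \<i> * D v)" if "u \<in> U'" for u
    using U(3) that unfolding cholomorphic_on_def U'_def by blast
  have contF: "continuous_on (DD \<eta>) F"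
  proof (rule continuous_at_imp_continuous_on, rule ballI)
    fix u :: "complex^('n+'m)" assume "u \<in> DD \<eta>"
    then have "u \<in> U'" using DDW WU by blast
    then obtain D where D: "(G has_derivative D) (at (Phi u))" using derivG by blast
    have "(F has_derivative (\<lambda>x. D (Phi x))) (at u)"
      unfolding F_def by (rule has_derivative_compose[OF bounded_linear_imp_has_derivative[OF bl_Phi] D])
    then show "isCont F u" using has_derivative_continuous by blast
  qed
  have hol: "(\<lambda>z. F (upd v j z)) holomorphic_on S" if v: "v \<in> DD \<eta>" for v j
  proof (subst holomorphic_on_open)
    show "open S" by (simp add: S_def open_box)
    show "\<forall>x\<in>S. \<exists>f'. ((\<lambda>z. F (upd v j z)) has_field_derivative f') (at x)"
    proof
      fix z assume z: "z \<in> S"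
      have "upd v j z \<in> U'" using updW[OF v z] WU by blast
      then obtain D where D: "(G has_derivative D) (at (Phi (upd v j z)))" and Di: "\<forall>w. D (cmul \<i> w) = \<i> * D w"
        using derivG by blast
      define ell where "ell h = Phi (upd 0 j h)" for h
      have lin: "linear ell"
        unfolding ell_def by (rule linearI) (auto simp: Phi_def vec_eq_iff)
      have aff: "(\<lambda>z. Phi (upd v j z)) = (\<lambda>z. Phi (upd v j 0) + ell z)"
      proof
        fix z
        have "upd v j z = upd v j 0 + upd 0 j z" by (simp add: vec_eq_iff)
        then show "Phi (upd v j z) = Phi (upd v j 0) + ell z"
          unfolding ell_def using linear_add[OF linear_Phi] by simp
      qed
      have dphi: "((\<lambda>z. Phi (upd v j z)) has_derivative ell) (at z)"
        unfolding aff using has_derivative_add[OF has_derivative_const bounded_linear_imp_has_derivative[of ell]] lin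
          linear_conv_bounded_linear by fastforce
      have comp: "((\<lambda>z. F (upd v j z)) has_derivative (\<lambda>h. D (ell h))) (at z)"
        unfolding F_def by (rule has_derivative_compose[OF dphi D])
      have linD: "linear D" using has_derivative_bounded_linear[OF D] bounded_linear.linear by blast
      have li: "ell \<i> = cmul \<i> (ell 1)" by (simp add: ell_def cmul_def Phi_def vec_eq_iff)
      have Dl: "D (ell h) = D (ell 1) * h" for h
      proof -
        have h: "h = Re h *\<^sub>R 1 + Im h *\<^sub>R \<i>" by (simp add: complex_eq_iff)
        have "ell h = ell (Re h *\<^sub>R 1 + Im h *\<^sub>R \<i>)" by (simp only: h[symmetric])
        also have "\<dots> = Re h *\<^sub>R ell 1 + Im h *\<^sub>R ell \<i>"
          by (simp only: linear_add[OF lin] linear_scale[OF lin])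
        finally have "ell h = Re h *\<^sub>R ell 1 + Im h *\<^sub>R ell \<i>" .
        then have "D (ell h) = Re h *\<^sub>R D (ell 1) + Im h *\<^sub>R (\<i> * D (ell 1))"
          using Di[rule_format, of "ell 1"] li by (simp add: linear_add[OF linD] linear_scale[OF linD])
        also have "\<dots> = D (ell 1) * h" by (simp add: scaleR_conv_of_real complex_eq_iff algebra_simps)
        finally show ?thesis .
      qed
      have "(\<lambda>h. D (ell h)) = (*) (D (ell 1))" by (rule ext) (rule Dl)
      then have "((\<lambda>z. F (upd v j z)) has_field_derivative (D (ell 1))) (at z)"
        using comp unfolding has_field_derivative_def by simp
      then show "\<exists>f'. ((\<lambda>z. F (upd v j z)) has_field_derivative f') (at z)" by blast
    qed
  qed
  obtain M where M: "\<forall>u\<in>DD \<eta>. cmod (F u) \<le> M"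
  proof -
    have "bounded (F ` DD \<eta>)" by (intro compact_imp_bounded compact_continuous_image contF DD_compact)
    then show ?thesis using that unfolding bounded_iff by auto
  qed
  have ag: "\<forall>x\<in>cube. \<forall>w\<in>cube. F (Psi x w) = of_real (f x w)"
    using agree by (simp add: F_def Phi_Psi)
  have oS: "open S" by (simp add: S_def open_box)
  have cS: "convex S" by (simp add: S_def convex_box)
  have e1: "\<eta> \<le> 1" using eta1 by linarith
  show ?thesis
    apply (rule exI[of _ F], rule exI[of _ \<eta>], rule exI[of _ S], rule exI[of _ M])
    using eta0 e1 oS cS RS contF hol M ag by blast
qed



lemma csa_mono:
  assumes "cheb_sep_approx f e1 h" "e1 \<le> e2" shows "cheb_sep_approx f e2 h"
proof -
  obtain \<phi> a where A: "h \<ge> 1" "\<forall>j<h. cheb_poly (\<phi> j)" "\<forall>j<h. cheb_poly (a j)"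
    "\<forall>x\<in>cube. \<forall>w\<in>cube. \<bar>f x w - (\<Sum>j<h. \<phi> j x * a j w)\<bar> \<le> e1"
    using assms(1) unfolding cheb_sep_approx_def by (elim exE conjE) (rule that; assumption)
  have "\<forall>x\<in>cube. \<forall>w\<in>cube. \<bar>f x w - (\<Sum>j<h. \<phi> j x * a j w)\<bar> \<le> e2"
    using A(4) assms(2) by (meson order_trans)
  then show ?thesis unfolding cheb_sep_approx_def using A(1-3) by blast
qed

lemma Re_mult_real_right: "Re (c * complex_of_real p) = Re c * p" by simp

definition rco :: "real^'n::finite \<Rightarrow> real^'m::finite \<Rightarrow> 'n + 'm \<Rightarrow> real" where
  "rco x w i = (case i of Inl a \<Rightarrow> x $ a | Inr b \<Rightarrow> w $ b)"

lemma Psi_rco: "Psi x w $ i = of_real (rco x w i)"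
  by (simp add: Psi_def rco_def split: sum.splits)

lemma prod_rco: "(\<Prod>i\<in>UNIV. (rco x w i) ^ (\<kappa> i)) =
   (\<Prod>a\<in>UNIV. (x $ a) ^ (\<kappa> (Inl a))) * (\<Prod>b\<in>UNIV. (w $ b) ^ (\<kappa> (Inr b)))"
proof -
  have "(\<Prod>i\<in>UNIV. (rco x w i) ^ (\<kappa> i)) = (\<Prod>i\<in>UNIV <+> UNIV. (rco x w i) ^ (\<kappa> i))"
    by (simp add: UNIV_Plus_UNIV)
  also have "\<dots> = (\<Prod>a\<in>UNIV. (x $ a) ^ (\<kappa> (Inl a))) * (\<Prod>b\<in>UNIV. (w $ b) ^ (\<kappa> (Inr b)))"
    by (subst prod.Plus) (auto simp: rco_def comp_def)
  finally show ?thesis .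
qed

lemma approx_all_d:
  fixes f :: "real^'n::finite \<Rightarrow> real^'m::finite \<Rightarrow> real"
  assumes "analytic_ext t f"
  shows "\<exists>C0 q. 0 \<le> C0 \<and> 0 < q \<and> q < 1 \<and> (\<forall>d\<ge>1. cheb_sep_approx f (C0 * q^d) (d ^ CARD('m)))"
proof -
  obtain F :: "complex^('n+'m) \<Rightarrow> complex" and \<eta> S M where
    eta: "0 < \<eta>" "\<eta> \<le> 1" and S: "open S" "convex S" "Rect \<eta> \<subseteq> S" and
    cont: "continuous_on (DD \<eta>) F" and hol: "\<forall>v\<in>DD \<eta>. \<forall>j. (\<lambda>z. F (upd v j z)) holomorphic_on S" and
    M: "\<forall>u\<in>DD \<eta>. cmod (F u) \<le> M" and ag: "\<forall>x\<in>cube. \<forall>w\<in>cube. F (Psi x w) = of_real (f x w)"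
    using prep_data[OF assms] by (elim exE conjE) (rule that; assumption)
  have M0: "0 \<le> M"
  proof -
    have "(0 :: complex^('n+'m)) \<in> DD \<eta>" using eta by (simp add: DD_def Rect_def)
    then show ?thesis using M norm_ge_zero order_trans by blast
  qed
  obtain js :: "('n + 'm) list" where js: "set js = UNIV" "distinct js"
    using finite_distinct_list[of "UNIV :: ('n+'m) set"] by auto
  define C0 where "C0 = 3 * (M / \<eta>) * (\<Sum>k<length js. (6 / \<eta>)^k)"
  have C00: "0 \<le> C0"
  proof -
    have "0 \<le> M / \<eta>" using M0 eta by simp
    moreover have "0 \<le> (\<Sum>k<length js. (6 / \<eta>)^k)" using eta by (intro sum_nonneg) simp
    ultimately show ?thesis unfolding C0_def by (intro mult_nonneg_nonneg) auto
  qed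
  have q: "0 < qq \<eta>" "qq \<eta> < 1" using qq_bounds[OF eta] by auto
  show ?thesis
  proof (intro exI conjI allI impI)
    show "0 \<le> C0" "0 < qq \<eta>" "qq \<eta> < 1" by (fact C00 q)+
    fix d :: nat assume d1: "1 \<le> d"
    obtain K C where K: "finite K" "\<forall>\<kappa>\<in>K. \<forall>i\<in>set js. \<kappa> i < d"
      "\<forall>\<kappa>\<in>K. \<forall>v w. (\<forall>i. i \<notin> set js \<longrightarrow> v $ i = w $ i) \<longrightarrow> C \<kappa> v = C \<kappa> w"
      "\<forall>v\<in>DD \<eta>. approx d \<eta> F js v = (\<Sum>\<kappa>\<in>K. C \<kappa> v * (\<Prod>i\<in>set js. (v $ i)^(\<kappa> i)))"
      using approx_struct[OF cont eta(1) js(2), of d] by (elim exE conjE) (rule that; assumption)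
    have Kd: "\<kappa> i < d" if "\<kappa> \<in> K" for \<kappa> i using K(2) that js(1) by auto
    define cc where "cc \<kappa> = Re (C \<kappa> 0)" for \<kappa>
    have Cc: "C \<kappa> v = C \<kappa> 0" if "\<kappa> \<in> K" for \<kappa> v using K(3) that js(1) by auto
    define T where "T \<kappa> x w = cc \<kappa> * ((\<Prod>a\<in>UNIV. (x $ a) ^ (\<kappa> (Inl a))) * (\<Prod>b\<in>UNIV. (w $ b) ^ (\<kappa> (Inr b))))"
      for \<kappa> and x :: "real^'n" and w :: "real^'m"
    have err: "\<bar>f x w - (\<Sum>\<kappa>\<in>K. T \<kappa> x w)\<bar> \<le> C0 * qq \<eta> ^ d" if x: "x \<in> cube" and w: "w \<in> cube" for x w
    proof -
      define v where "v = Psi x w"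
      have rc: "\<bar>rco x w i\<bar> \<le> 1" for i using x w by (auto simp: rco_def cube_def split: sum.splits)
      have "\<bar>rco x w i\<bar> \<le> 1 + \<eta>" for i using rc[of i] eta by linarith
      then have vD: "v \<in> DD \<eta>" using eta by (auto simp: DD_def Rect_def v_def Psi_rco)
      have vr: "\<forall>i\<in>set js. \<exists>r. v $ i = complex_of_real r \<and> \<bar>r\<bar> \<le> 1"
        using rc by (auto simp: v_def Psi_rco)
      have e1: "cmod (F v - approx d \<eta> F js v) \<le> 3 * (M * qq \<eta> ^ d / \<eta>) * (\<Sum>k<length js. (6 / \<eta>)^k)"
        by (rule approx_error[OF cont eta _ S _ js(2) vD vr]) (use hol M in auto)
      have e2: "3 * (M * qq \<eta> ^ d / \<eta>) * (\<Sum>k<length js. (6 / \<eta>)^k) = C0 * qq \<eta> ^ d"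
        by (simp add: C0_def)
      have Fv: "Re (F v) = f x w" using ag x w by (simp add: v_def)
      have av: "Re (approx d \<eta> F js v) = (\<Sum>\<kappa>\<in>K. T \<kappa> x w)"
      proof -
        have "approx d \<eta> F js v = (\<Sum>\<kappa>\<in>K. C \<kappa> v * (\<Prod>i\<in>set js. (v $ i)^(\<kappa> i)))"
          using K(4) vD by blast
        also have "\<dots> = (\<Sum>\<kappa>\<in>K. C \<kappa> 0 * of_real (\<Prod>i\<in>UNIV. (rco x w i) ^ (\<kappa> i)))"
        proof (rule sum.cong[OF refl])
          fix \<kappa> assume "\<kappa> \<in> K"
          from Cc[OF this, of v] show "C \<kappa> v * (\<Prod>i\<in>set js. (v $ i)^(\<kappa> i)) = C \<kappa> 0 * of_real (\<Prod>i\<in>UNIV. (rco x w i) ^ (\<kappa> i))"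
            by (simp add: js(1) v_def Psi_rco of_real_prod)
        qed
        finally have "Re (approx d \<eta> F js v) = (\<Sum>\<kappa>\<in>K. Re (C \<kappa> 0 * of_real (\<Prod>i\<in>UNIV. (rco x w i) ^ (\<kappa> i))))"
          by (simp add: Re_sum)
        also have "\<dots> = (\<Sum>\<kappa>\<in>K. T \<kappa> x w)"
          by (rule sum.cong[OF refl]) (simp only: Re_mult_real_right prod_rco T_def cc_def)
        finally show ?thesis .
      qed
      have "\<bar>f x w - (\<Sum>\<kappa>\<in>K. T \<kappa> x w)\<bar> = \<bar>Re (F v - approx d \<eta> F js v)\<bar>" using Fv av by simp
      also have "\<dots> \<le> cmod (F v - approx d \<eta> F js v)" by (rule abs_Re_le_cmod)
      finally show ?thesis using e1 e2 by simp
    qed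
    define R where "R = PiE (UNIV :: 'm set) (\<lambda>_. {..<d})"
    have finR: "finite R" unfolding R_def by (simp add: finite_PiE)
    have cardR: "card R = d ^ CARD('m)" unfolding R_def by (simp add: card_PiE)
    obtain g where g: "bij_betw g {0..<card R} R" using ex_bij_betw_nat_finite[OF finR] by blast
    define pr where "pr \<kappa> = (\<lambda>b. \<kappa> (Inr b))" for \<kappa> :: "'n + 'm \<Rightarrow> nat"
    have prR: "pr ` K \<subseteq> R" using Kd by (auto simp: R_def pr_def PiE_iff)
    define \<phi> where "\<phi> k x = (\<Sum>\<kappa>\<in>{\<kappa>\<in>K. pr \<kappa> = g k}. cc \<kappa> * (\<Prod>a\<in>UNIV. (x $ a) ^ (\<kappa> (Inl a))))"
      for k and x :: "real^'n"
    define a where "a k w = (\<Prod>b\<in>UNIV. (w $ b) ^ (g k b))" for k and w :: "real^'m"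
    show "cheb_sep_approx f (C0 * qq \<eta> ^ d) (d ^ CARD('m))"
      unfolding cheb_sep_approx_def
    proof (intro conjI exI[of _ \<phi>] exI[of _ a] allI impI ballI)
      show "1 \<le> d ^ CARD('m)" using d1 by simp
      fix j assume "j < d ^ CARD('m)"
      show "cheb_poly (\<phi> j)" unfolding \<phi>_def
        by (intro cheb_poly_sum cheb_poly_scale cheb_poly_monomial) (use K(1) in auto)
      show "cheb_poly (a j)" unfolding a_def by (rule cheb_poly_monomial)
    next
      fix x :: "real^'n" and w :: "real^'m" assume x: "x \<in> cube" and w: "w \<in> cube"
      have "(\<Sum>j<d ^ CARD('m). \<phi> j x * a j w) = (\<Sum>k\<in>{0..<card R}. \<Sum>\<kappa>\<in>{\<kappa>\<in>K. pr \<kappa> = g k}. T \<kappa> x w)"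
        unfolding cardR[symmetric] lessThan_atLeast0
      proof (rule sum.cong[OF refl])
        fix k
        show "\<phi> k x * a k w = (\<Sum>\<kappa>\<in>{\<kappa>\<in>K. pr \<kappa> = g k}. T \<kappa> x w)"
          unfolding \<phi>_def sum_distrib_right
        proof (rule sum.cong[OF refl])
          fix \<kappa> assume "\<kappa> \<in> {\<kappa>\<in>K. pr \<kappa> = g k}"
          then have "g k = pr \<kappa>" by simp
          then show "cc \<kappa> * (\<Prod>a\<in>UNIV. (x $ a) ^ (\<kappa> (Inl a))) * a k w = T \<kappa> x w"
            by (simp add: a_def T_def pr_def)
        qed
      qed
      also have "\<dots> = (\<Sum>\<rho>\<in>R. \<Sum>\<kappa>\<in>{\<kappa>\<in>K. pr \<kappa> = \<rho>}. T \<kappa> x w)"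
        by (rule sum.reindex_bij_betw[OF g])
      also have "\<dots> = (\<Sum>\<kappa>\<in>K. T \<kappa> x w)"
        by (rule sum.group[OF K(1) finR prR])
      finally show "\<bar>f x w - (\<Sum>j<d ^ CARD('m). \<phi> j x * a j w)\<bar> \<le> C0 * qq \<eta> ^ d"
        using err[OF x w] by simp
    qed
  qed
qed



theorem theorem2:
  fixes f :: "real^'n \<Rightarrow> real^'m \<Rightarrow> real" and t :: real
  assumes "t > 0"
    and "analytic_ext t f"
  shows "(\<forall>eps>0. \<exists>h. cheb_sep_approx f eps h) \<and>
         (\<exists>C eps0. eps0 > 0 \<and>
            (\<forall>eps. 0 < eps \<and> eps < eps0 \<longrightarrow>
               (\<exists>h. cheb_sep_approx f eps h \<and> real h \<le> C * (ln (1 / eps)) ^ CARD('m))))"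
proof -
  obtain C0 q where C0: "0 \<le> C0" and q: "0 < q" "q < 1"
    and A: "\<forall>d\<ge>1. cheb_sep_approx f (C0 * q^d) (d ^ CARD('m))"
    using approx_all_d[OF assms(2)] by (elim exE conjE) (rule that; assumption)
  define C1 where "C1 = max C0 1"
  have C1: "1 \<le> C1" "C0 \<le> C1" by (auto simp: C1_def)
  define lam where "lam = - ln q"
  have lam: "0 < lam" using q by (simp add: lam_def)
  define eps0 where "eps0 = min (exp (-1)) (1 / C1)"
  have eps00: "0 < eps0" using C1 by (simp add: eps0_def)
  define C where "C = (2 / lam + 1) ^ CARD('m)"
  have main: "\<exists>h. cheb_sep_approx f eps h \<and> real h \<le> C * (ln (1 / eps)) ^ CARD('m)"
    if e: "0 < eps" "eps < eps0" for eps
  proof -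
    define L where "L = ln (1 / eps)"
    have Le: "L = - ln eps" using e by (simp add: L_def ln_div)
    have "ln eps < ln (exp (-1))" using e by (subst ln_less_cancel_iff) (auto simp: eps0_def)
    then have L1: "1 \<le> L" by (simp add: Le)
    define d where "d = nat \<lceil>2 * L / lam\<rceil>"
    have pos: "0 < 2 * L / lam" using L1 lam by simp
    have dge: "2 * L / lam \<le> real d" unfolding d_def by (rule real_nat_ceiling_ge)
    have dle: "real d \<le> 2 * L / lam + 1" unfolding d_def using pos
      by (simp add: of_nat_nat)
    have d1: "1 \<le> d" using dge pos by linarith
    have "lam * (2 * L / lam) \<le> lam * real d" using dge lam by (intro mult_left_mono) auto
    then have ld: "2 * L \<le> lam * real d" using lam by simp
    have "q ^ d = exp (real d * ln q)" using q by (simp add: exp_of_nat_mult)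
    also have "\<dots> \<le> exp (- (2 * L))" using ld by (simp add: lam_def algebra_simps)
    also have "\<dots> = exp (ln eps) ^ 2" by (simp add: Le exp_of_nat_mult[symmetric])
    also have "\<dots> = eps ^ 2" using e by simp
    finally have qd: "q ^ d \<le> eps ^ 2" .
    have "C0 * q ^ d \<le> C1 * eps ^ 2"
      using C0 C1 qd q by (intro mult_mono) auto
    also have "\<dots> = (C1 * eps) * eps" by (simp add: power2_eq_square)
    also have "\<dots> \<le> 1 * eps"
    proof (rule mult_right_mono)
      have "eps \<le> 1 / C1" using e by (simp add: eps0_def)
      then show "C1 * eps \<le> 1" using C1 by (simp add: field_simps)
    qed (use e in simp)
    finally have err: "C0 * q ^ d \<le> eps" by simp
    have cs: "cheb_sep_approx f eps (d ^ CARD('m))"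
      using csa_mono[OF A[rule_format, OF d1] err] .
    have "real d \<le> (2 / lam + 1) * L"
    proof -
      have "2 * L / lam + 1 \<le> 2 * L / lam + L" using L1 by simp
      then show ?thesis using dle by (simp add: algebra_simps)
    qed
    then have "real d ^ CARD('m) \<le> ((2 / lam + 1) * L) ^ CARD('m)" by (intro power_mono) auto
    then have "real (d ^ CARD('m)) \<le> C * L ^ CARD('m)" by (simp add: C_def power_mult_distrib)
    then show ?thesis using cs unfolding L_def by blast
  qed
  show ?thesis
  proof (intro conjI allI impI)
    fix eps :: real assume "0 < eps"
    define e' where "e' = min eps (eps0 / 2)"
    have "0 < e'" "e' < eps0" using \<open>0 < eps\<close> eps00 by (auto simp: e'_def)
    then obtain h where "cheb_sep_approx f e' h" using main by blast
    then have "cheb_sep_approx f eps h" by (rule csa_mono) (simp add: e'_def)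
    then show "\<exists>h. cheb_sep_approx f eps h" by blast
  next
    show "\<exists>C eps0. eps0 > 0 \<and> (\<forall>eps. 0 < eps \<and> eps < eps0 \<longrightarrow>
               (\<exists>h. cheb_sep_approx f eps h \<and> real h \<le> C * (ln (1 / eps)) ^ CARD('m)))"
      using eps00 main by blast
  qed
qed


end
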